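(* For every $\Delta\in\mathbb{N}$ there exists $k_0$ such that for all $k\ge k_0$ the following holds. Let $T$ be a tree with $k$ edges and $\Delta(T)\le\Delta$. Then there exist a matching $M$, a tree $S$ and a forest $F$, all subgraphs of $T$, whose edge sets form a partition of $E(T)$, such that: (a) $S$ and $F$ are vertex-disjoint; (b) every edge of $M$ has exactly one endpoint in $S$ and one endpoint in $F$; (c) $S$ and every component of $F$ each have at most $\lceil k/2\rceil$ vertices; (d) all vertices of $V(M)\cap V(S)$ belong to the same bipartition class of $T$; (e) the smallest subtree of $S$ containing $V(M)\cap V(S)$ has at most $\Delta^{4\Delta+1}$ vertices.
   Context: A matching is a set of pairwise vertex-disjoint edges, viewed as a subgraph. $\Delta(T)$ is the maximum degree of $T$. *)

theory Defs
  imports Complex_Main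
begin

definition ugraph :: "'a set \<Rightarrow> 'a set set \<Rightarrow> bool" where
  "ugraph V E \<longleftrightarrow> finite V \<and> (\<forall>e\<in>E. \<exists>u v. u \<in> V \<and> v \<in> V \<and> u \<noteq> v \<and> e = {u, v})"

definition reach :: "'a set set \<Rightarrow> 'a \<Rightarrow> 'a \<Rightarrow> bool" where
  "reach E = (\<lambda>u v. {u, v} \<in> E)\<^sup>*\<^sup>*"

definition connected_graph :: "'a set \<Rightarrow> 'a set set \<Rightarrow> bool" where
  "connected_graph V E \<longleftrightarrow> V \<noteq> {} \<and> (\<forall>u\<in>V. \<forall>v\<in>V. reach E u v)"

definition is_cycle :: "'a set set \<Rightarrow> 'a list \<Rightarrow> bool" where
  "is_cycle E xs \<longleftrightarrow> length xs \<ge> 3 \<and> distinct xs \<and>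
     (\<forall>i. Suc i < length xs \<longrightarrow> {xs ! i, xs ! Suc i} \<in> E) \<and> {last xs, hd xs} \<in> E"

definition forest :: "'a set \<Rightarrow> 'a set set \<Rightarrow> bool" where
  "forest V E \<longleftrightarrow> ugraph V E \<and> \<not> (\<exists>xs. is_cycle E xs)"

definition tree :: "'a set \<Rightarrow> 'a set set \<Rightarrow> bool" where
  "tree V E \<longleftrightarrow> forest V E \<and> connected_graph V E"

definition subgraph :: "'a set \<Rightarrow> 'a set set \<Rightarrow> 'a set \<Rightarrow> 'a set set \<Rightarrow> bool" where
  "subgraph V' E' V E \<longleftrightarrow> ugraph V' E' \<and> V' \<subseteq> V \<and> E' \<subseteq> E"

definition max_degree_le :: "'a set \<Rightarrow> 'a set set \<Rightarrow> nat \<Rightarrow> bool" where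
  "max_degree_le V E d \<longleftrightarrow> (\<forall>v\<in>V. card {e\<in>E. v \<in> e} \<le> d)"

text \<open>A matching (as a set of edges); its vertex set is the union of its edges.\<close>
definition matching :: "'a set set \<Rightarrow> bool" where
  "matching M \<longleftrightarrow> (\<forall>e\<in>M. \<forall>e'\<in>M. e \<noteq> e' \<longrightarrow> e \<inter> e' = {})"

definition component :: "'a set \<Rightarrow> 'a set set \<Rightarrow> 'a \<Rightarrow> 'a set" where
  "component V E v = {u\<in>V. reach E v u}"

definition same_bip_class :: "'a set \<Rightarrow> 'a set set \<Rightarrow> 'a set \<Rightarrow> bool" where
  "same_bip_class V E X \<longleftrightarrow> (\<exists>c :: 'a \<Rightarrow> bool. (\<forall>u v. {u, v} \<in> E \<longrightarrow> c u \<noteq> c v) \<and> (\<forall>x\<in>X. c x))"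

definition min_subtree_card :: "'a set \<Rightarrow> 'a set set \<Rightarrow> 'a set \<Rightarrow> nat" where
  "min_subtree_card V E X = (LEAST n. \<exists>V' E'. subgraph V' E' V E \<and> tree V' E' \<and> X \<subseteq> V' \<and> n = card V')"

end

theory Submission
  imports Defs
begin

lemma ceil_half: "nat \<lceil>real k / 2\<rceil> = (k + 1) div 2"
proof (cases "even k")
  case True
  then obtain m where "k = 2 * m" by blast
  then show ?thesis by simp
next
  case False
  then obtain m where m: "k = 2 * m + 1" using oddE by blast
  have "real k / 2 = real m + 1 / 2" using m by simp
  then have "\<lceil>real k / 2\<rceil> = int m + 1" by (simp add: ceiling_eq_iff)
  then show ?thesis using m by simp
qed

lemma rho_half:
  assumes "1 \<le> D"
  shows "(1 - 1 / real D) ^ D \<le> 1 / 2"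
proof -
  have x0: "0 \<le> 1 - 1 / real D" using assms by simp
  have "1 + real D * (1 / real D) \<le> (1 + 1 / real D) ^ D"
  proof (rule Bernoulli_inequality)
    have "0 \<le> 1 / real D" by simp
    then show "- 1 \<le> 1 / real D" by linarith
  qed
  then have b2: "2 \<le> (1 + 1 / real D) ^ D" using assms by simp
  have "(1 - 1 / real D) ^ D * (1 + 1 / real D) ^ D = (1 - 1 / real D ^ 2) ^ D"
    by (simp add: power_mult_distrib[symmetric] algebra_simps power2_eq_square)
  also have "\<dots> \<le> 1"
    by (rule power_le_one) (use assms in \<open>auto simp: field_simps\<close>)
  finally have "(1 - 1 / real D) ^ D * (1 + 1 / real D) ^ D \<le> 1" .
  moreover have "(1 - 1 / real D) ^ D * 2 \<le> (1 - 1 / real D) ^ D * (1 + 1 / real D) ^ D"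
    using b2 x0 by (intro mult_left_mono) auto
  ultimately show ?thesis by linarith
qed

lemma rho_quarter:
  assumes "1 \<le> D"
  shows "(1 - 1 / real D) ^ (2 * D) \<le> 1 / 4"
proof -
  have x0: "0 \<le> (1 - 1 / real D) ^ D" using assms by simp
  have "(1 - 1 / real D) ^ (2 * D) = ((1 - 1 / real D) ^ D) ^ 2" by (simp add: power_mult[symmetric] mult.commute)
  also have "\<dots> \<le> (1 / 2) ^ 2" using rho_half[OF assms] x0 by (intro power_mono) auto
  finally show ?thesis by (simp add: power2_eq_square)
qed

fun walk :: "'a set set \<Rightarrow> 'a list \<Rightarrow> bool" where
  "walk E [] = True"
| "walk E [x] = True"
| "walk E (x # y # xs) = ({x, y} \<in> E \<and> walk E (y # xs))"

lemma walk_suffix: "walk E (us @ ws) \<Longrightarrow> walk E ws"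
proof (induction us)
  case Nil then show ?case by simp
next
  case (Cons a us)
  then show ?case by (cases "us @ ws") auto
qed

lemma walk_nth: "walk E xs \<Longrightarrow> Suc i < length xs \<Longrightarrow> {xs ! i, xs ! Suc i} \<in> E"
proof (induction E xs arbitrary: i rule: walk.induct)
  case (3 E x y xs)
  then show ?case by (cases i) auto
qed auto

lemma reach_walk:
  assumes "reach E a b"
  shows "\<exists>xs. xs \<noteq> [] \<and> hd xs = a \<and> last xs = b \<and> distinct xs \<and> walk E xs"
  using assms unfolding reach_def
proof (induction rule: converse_rtranclp_induct)
  case base
  then show ?case by (intro exI[of _ "[b]"]) auto
next
  case (step a y)
  then obtain ys where ys: "ys \<noteq> []" "hd ys = y" "last ys = b" "distinct ys" "walk E ys" by blast
  show ?case
  proof (cases "a \<in> set ys")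
    case True
    then obtain us ws where "ys = us @ a # ws" by (meson split_list)
    with ys show ?thesis
      by (intro exI[of _ "a # ws"]) (auto dest: walk_suffix)
  next
    case False
    with ys step(1) show ?thesis
      by (intro exI[of _ "a # ys"]) (cases ys, auto)
  qed
qed

lemma reach_sym: "reach E u v \<Longrightarrow> reach E v u"
  unfolding reach_def
proof (induction rule: rtranclp_induct)
  case base then show ?case by simp
next
  case (step y z)
  have "{z, y} \<in> E" using step(2) by (simp add: insert_commute)
  then show ?case using step(3) by (meson converse_rtranclp_into_rtranclp)
qed

lemma reach_refl[simp]: "reach E u u"
  unfolding reach_def by simp

lemma reach_trans: "reach E u v \<Longrightarrow> reach E v w \<Longrightarrow> reach E u w"
  unfolding reach_def by (meson rtranclp_trans)

lemma reach_edge: "{u, v} \<in> E \<Longrightarrow> reach E u v"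
  unfolding reach_def by (simp add: r_into_rtranclp)

lemma reach_mono: assumes "E \<subseteq> E'" "reach E u v" shows "reach E' u v"
  using assms(2) unfolding reach_def
proof (induction rule: rtranclp_induct)
  case (step y z)
  then show ?case using assms(1) by (meson rtranclp.rtrancl_into_rtrancl subsetD)
qed simp

lemma reach_step: "reach E u v \<Longrightarrow> {v, w} \<in> E \<Longrightarrow> reach E u w"
  unfolding reach_def by (simp add: rtranclp.rtrancl_into_rtrancl)

lemma reach_closed:
  assumes "reach E a b" "a \<in> C" "\<And>x y. x \<in> C \<Longrightarrow> {x, y} \<in> E \<Longrightarrow> y \<in> C"
  shows "b \<in> C"
  using assms(1,2) unfolding reach_def
proof (induction rule: rtranclp_induct)
  case (step y z)
  then show ?case using assms(3) by blast
qed

lemma reach_restrict: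
  assumes "reach E a b" "a \<in> C" "\<And>x y. x \<in> C \<Longrightarrow> {x, y} \<in> E \<Longrightarrow> y \<in> C"
  shows "reach {e \<in> E. e \<subseteq> C} a b"
proof -
  have "b \<in> C \<and> reach {e \<in> E. e \<subseteq> C} a b"
    using assms(1) unfolding reach_def[of E]
  proof (induction rule: rtranclp_induct)
    case base then show ?case using assms(2) by simp
  next
    case (step y z)
    have yC: "y \<in> C" using step(3) by simp
    have zC: "z \<in> C" using assms(3)[OF yC] step(2) by simp
    have "{y, z} \<in> {e \<in> E. e \<subseteq> C}" using step(2) yC zC by simp
    then have "reach {e \<in> E. e \<subseteq> C} a z" using step(3) reach_step[of "{e \<in> E. e \<subseteq> C}" a y z] by simp
    then show ?case using zC by simp
  qed
  then show ?thesis by (rule conjunct2)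
qed


lemma walk_nth_mono: "walk E' xs \<Longrightarrow> E' \<subseteq> E \<Longrightarrow> Suc i < length xs \<Longrightarrow> {xs ! i, xs ! Suc i} \<in> E"
  using walk_nth by blast

locale tr =
  fixes V :: "'a set" and E :: "'a set set"
  assumes tree: "tree V E"
begin

lemma finV: "finite V"
  using tree unfolding tree_def forest_def ugraph_def by blast

lemma edge: "e \<in> E \<Longrightarrow> \<exists>u v. u \<in> V \<and> v \<in> V \<and> u \<noteq> v \<and> e = {u, v}"
  using tree unfolding tree_def forest_def ugraph_def by blast

lemma nocyc: "\<not> is_cycle E xs"
  using tree unfolding tree_def forest_def by blast

lemma conn: "u \<in> V \<Longrightarrow> v \<in> V \<Longrightarrow> reach E u v"
  using tree unfolding tree_def connected_graph_def by blast

lemma Vne: "V \<noteq> {}"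
  using tree unfolding tree_def connected_graph_def by blast

lemma edgeV: "{u, v} \<in> E \<Longrightarrow> u \<in> V \<and> v \<in> V \<and> u \<noteq> v"
  using edge[of "{u,v}"] by (auto simp: doubleton_eq_iff)

lemma finE: "finite E"
proof -
  have "E \<subseteq> Pow V" using edge by blast
  then show ?thesis using finV by (meson finite_Pow_iff finite_subset)
qed

lemma reachV: "reach E' u v \<Longrightarrow> E' \<subseteq> E \<Longrightarrow> u \<in> V \<Longrightarrow> v \<in> V"
proof -
  assume r: "reach E' u v" and sub: "E' \<subseteq> E" and u: "u \<in> V"
  have cl: "\<And>x y. x \<in> V \<Longrightarrow> {x, y} \<in> E' \<Longrightarrow> y \<in> V" using sub edgeV by blast
  show "v \<in> V" using reach_closed[of E' u v V, OF r u cl] .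
qed

lemma cut: assumes "{p, v} \<in> E" shows "\<not> reach (E - {{p, v}}) v p"
proof
  assume r: "reach (E - {{p, v}}) v p"
  obtain xs where xs: "xs \<noteq> []" "hd xs = v" "last xs = p" "distinct xs" "walk (E - {{p, v}}) xs"
    using reach_walk[OF r] by blast
  have pv: "p \<noteq> v" using edgeV[OF assms] by simp
  have l2: "length xs \<ge> 2"
  proof (cases xs)
    case Nil with xs(1) show ?thesis by simp
  next
    case (Cons a ys)
    show ?thesis
    proof (cases ys)
      case Nil
      then have "xs = [a]" using Cons by simp
      then show ?thesis using xs(2,3) pv by simp
    next
      case (Cons b zs)
      then show ?thesis using \<open>xs = a # ys\<close> by simp
    qed
  qed
  show False
  proof (cases "length xs = 2")
    case True
    then obtain x y where xy: "xs = [x, y]" by (auto simp: length_Suc_conv numeral_2_eq_2)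
    then have "{x, y} \<in> E - {{p, v}}" using xs(5) by simp
    moreover have "x = v" "y = p" using xy xs(2,3) by simp_all
    ultimately show False by (simp add: insert_commute)
  next
    case False
    then have "length xs \<ge> 3" using l2 by simp
    moreover have "\<forall>i. Suc i < length xs \<longrightarrow> {xs ! i, xs ! Suc i} \<in> E"
      using walk_nth[OF xs(5)] by blast
    moreover have "{last xs, hd xs} \<in> E" using xs(2,3) assms by (simp add: insert_commute)
    ultimately have "is_cycle E xs" using xs(4) unfolding is_cycle_def by blast
    then show False using nocyc by blast
  qed
qed

definition nb :: "'a \<Rightarrow> 'a set" where "nb v = {w. {v, w} \<in> E}"
definition Br :: "'a \<Rightarrow> 'a \<Rightarrow> 'a set" where "Br p v = {u \<in> V. reach (E - {{p, v}}) v u}"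

lemma nb_V: "nb v \<subseteq> V" unfolding nb_def using edgeV by blast
lemma fin_nb: "finite (nb v)" using nb_V finV finite_subset by blast
lemma Br_V: "Br p v \<subseteq> V" unfolding Br_def by blast
lemma fin_Br: "finite (Br p v)" using Br_V finV finite_subset by blast
lemma v_Br: "v \<in> V \<Longrightarrow> v \<in> Br p v" unfolding Br_def by simp

lemma Br_closed: "x \<in> Br p v \<Longrightarrow> {x, y} \<in> E \<Longrightarrow> {x, y} \<noteq> {p, v} \<Longrightarrow> y \<in> Br p v"
  unfolding Br_def using edgeV reach_step[of "E - {{p, v}}" v x y] by blast

lemma v_notin_Br: "{v, w} \<in> E \<Longrightarrow> v \<notin> Br v w"
  unfolding Br_def using cut[of v w] by (auto simp: insert_commute)

lemma p_notin_Br: "{p, v} \<in> E \<Longrightarrow> p \<notin> Br p v"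
  unfolding Br_def using cut[of p v] by auto

lemma Br_reach_in:
  assumes "v \<in> V" "x \<in> Br p v"
  shows "reach {e \<in> E. e \<subseteq> Br p v} v x"
proof -
  have r: "reach (E - {{p, v}}) v x" using assms(2) unfolding Br_def by simp
  have cl: "\<And>a b. a \<in> Br p v \<Longrightarrow> {a, b} \<in> E - {{p, v}} \<Longrightarrow> b \<in> Br p v"
  proof -
    fix a b assume "a \<in> Br p v" "{a, b} \<in> E - {{p, v}}"
    then show "b \<in> Br p v" using Br_closed[of a p v b] by simp
  qed
  have r2: "reach {e \<in> E - {{p, v}}. e \<subseteq> Br p v} v x"
    using reach_restrict[of "E - {{p, v}}" v x "Br p v", OF r v_Br[OF assms(1)] cl] .
  have sub: "{e \<in> E - {{p, v}}. e \<subseteq> Br p v} \<subseteq> {e \<in> E. e \<subseteq> Br p v}" by blast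
  show ?thesis using reach_mono[OF sub r2] .
qed

lemma Br_restrict_reach:
  assumes "{v, w} \<in> E" "x \<in> Br v w"
  shows "reach {e \<in> E. e \<subseteq> Br v w} w x"
  using Br_reach_in[of w x v] assms edgeV[OF assms(1)] by blast

lemma Br_decomp:
  assumes "v \<in> V"
  shows "Br p v = insert v (\<Union>w\<in>nb v - {p}. Br v w)"
proof
  show "insert v (\<Union>w\<in>nb v - {p}. Br v w) \<subseteq> Br p v"
  proof
    fix x assume "x \<in> insert v (\<Union>w\<in>nb v - {p}. Br v w)"
    then consider "x = v" | w where "w \<in> nb v" "w \<noteq> p" "x \<in> Br v w" by blast
    then show "x \<in> Br p v"
    proof cases
      case 1 then show ?thesis using v_Br assms by simp
    next
      case 2
      then have e: "{v, w} \<in> E" unfolding nb_def by simp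
      have r: "reach {e \<in> E. e \<subseteq> Br v w} w x" using Br_restrict_reach[OF e 2(3)] .
      have sub: "{e \<in> E. e \<subseteq> Br v w} \<subseteq> E - {{p, v}}" using v_notin_Br[OF e] by auto
      have r2: "reach (E - {{p, v}}) w x" using reach_mono[OF sub r] .
      have "{v, w} \<in> E - {{p, v}}" using e 2(2) edgeV[OF e] by (auto simp: doubleton_eq_iff)
      then have r1: "reach (E - {{p, v}}) v w" by (rule reach_edge)
      have "reach (E - {{p, v}}) v x" using reach_trans[OF r1 r2] .
      moreover have "x \<in> V" using 2(3) Br_V by blast
      ultimately show ?thesis unfolding Br_def by simp
    qed
  qed
next
  let ?R = "insert v (\<Union>w\<in>nb v - {p}. Br v w)"
  show "Br p v \<subseteq> ?R"
  proof
    fix x assume "x \<in> Br p v"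
    then have "reach (E - {{p, v}}) v x" unfolding Br_def by simp
    then show "x \<in> ?R"
    proof (rule reach_closed)
      show "v \<in> ?R" by simp
    next
      fix a b assume a: "a \<in> ?R" and ab: "{a, b} \<in> E - {{p, v}}"
      show "b \<in> ?R"
      proof (cases "a = v")
        case True
        then have bn: "b \<in> nb v" "b \<noteq> p" using ab unfolding nb_def by (auto simp: insert_commute)
        then have "b \<in> V" using nb_V by blast
        then have "b \<in> Br v b" by (rule v_Br)
        then show ?thesis using bn by blast
      next
        case False
        then obtain w where w: "w \<in> nb v" "w \<noteq> p" "a \<in> Br v w" using a by blast
        show ?thesis
        proof (cases "{a, b} = {v, w}")
          case True then show ?thesis using False by (auto simp: doubleton_eq_iff)
        next
          case False
          have "{a, b} \<in> E" using ab by simp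
          then have "b \<in> Br v w" using Br_closed[OF w(3) _ False] by simp
          then show ?thesis using w by blast
        qed
      qed
    qed
  qed
qed

lemma Br_disj:
  assumes "w1 \<in> nb v" "w2 \<in> nb v" "w1 \<noteq> w2"
  shows "Br v w1 \<inter> Br v w2 = {}"
proof (rule ccontr)
  assume "Br v w1 \<inter> Br v w2 \<noteq> {}"
  then obtain x where x: "x \<in> Br v w1" "x \<in> Br v w2" by blast
  have e1: "{v, w1} \<in> E" and e2: "{v, w2} \<in> E" using assms unfolding nb_def by auto
  have r0: "reach {e \<in> E. e \<subseteq> Br v w2} w2 x" using Br_restrict_reach[OF e2 x(2)] .
  have sub: "{e \<in> E. e \<subseteq> Br v w2} \<subseteq> E - {{v, w1}}" using v_notin_Br[OF e2] by auto
  have "reach (E - {{v, w1}}) x w2" using reach_sym[OF reach_mono[OF sub r0]] .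
  moreover have "reach (E - {{v, w1}}) w1 x" using x(1) unfolding Br_def by simp
  ultimately have "reach (E - {{v, w1}}) w1 w2" by (rule reach_trans[rotated])
  then have w2B: "w2 \<in> Br v w1" using edgeV[OF e2] unfolding Br_def by simp
  have "{w2, v} \<in> E" using e2 by (simp add: insert_commute)
  moreover have "{w2, v} \<noteq> {v, w1}" using assms(3) by (auto simp: doubleton_eq_iff)
  ultimately have "v \<in> Br v w1" using Br_closed[OF w2B] by simp
  then show False using v_notin_Br[OF e1] by simp
qed

lemma Br_compl:
  assumes "{p, v} \<in> E"
  shows "Br p v \<inter> Br v p = {}" "Br p v \<union> Br v p = V"
proof -
  have eq: "E - {{v, p}} = E - {{p, v}}" by (simp add: insert_commute)
  show "Br p v \<inter> Br v p = {}"
  proof (rule ccontr)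
    assume "Br p v \<inter> Br v p \<noteq> {}"
    then obtain x where x1: "reach (E - {{p, v}}) v x" and x2: "reach (E - {{p, v}}) p x"
      unfolding Br_def eq by blast
    have "reach (E - {{p, v}}) v p" using reach_trans[OF x1 reach_sym[OF x2]] .
    then show False using cut[OF assms] by simp
  qed
  show "Br p v \<union> Br v p = V"
  proof
    show "Br p v \<union> Br v p \<subseteq> V" using Br_V by blast
    show "V \<subseteq> Br p v \<union> Br v p"
    proof
      fix x assume xV: "x \<in> V"
      have vV: "v \<in> V" using edgeV[OF assms] by simp
      have "reach E v x" using conn[OF vV xV] .
      then have "reach (E - {{p, v}}) v x \<or> reach (E - {{p, v}}) p x"
        unfolding reach_def[of E]
      proof (induction rule: rtranclp_induct)
        case base then show ?case by simp
      next
        case (step y z)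
        show ?case
        proof (cases "{y, z} = {p, v}")
          case True
          then have "z = p \<or> z = v" by (auto simp: doubleton_eq_iff)
          then show ?thesis by auto
        next
          case False
          then have yz: "{y, z} \<in> E - {{p, v}}" using step by simp
          from step(3) show ?thesis
          proof
            assume "reach (E - {{p, v}}) v y" then have "reach (E - {{p, v}}) v z" using reach_step[OF _ yz] by simp
            then show ?thesis by simp
          next
            assume "reach (E - {{p, v}}) p y" then have "reach (E - {{p, v}}) p z" using reach_step[OF _ yz] by simp
            then show ?thesis by simp
          qed
        qed
      qed
      then show "x \<in> Br p v \<union> Br v p" unfolding Br_def eq using xV by blast
    qed
  qed
qed

lemma Br_nonedge: assumes "v \<in> V" "{p, v} \<notin> E" shows "Br p v = V"
proof -
  have "E - {{p, v}} = E" using assms(2) by blast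
  then show ?thesis unfolding Br_def using conn[OF assms(1)] Br_V by auto
qed

lemma nb_sym: "w \<in> nb v \<longleftrightarrow> v \<in> nb w" unfolding nb_def by (simp add: insert_commute)

lemma card_nb: "card (nb v) = card {e \<in> E. v \<in> e}"
proof -
  have "bij_betw (\<lambda>w. {v, w}) (nb v) {e \<in> E. v \<in> e}"
  proof (rule bij_betwI')
    show "\<And>x y. x \<in> nb v \<Longrightarrow> y \<in> nb v \<Longrightarrow> ({v, x} = {v, y}) = (x = y)"
      by (auto simp: doubleton_eq_iff)
    show "\<And>x. x \<in> nb v \<Longrightarrow> {v, x} \<in> {e \<in> E. v \<in> e}" unfolding nb_def by simp
    show "\<And>y. y \<in> {e \<in> E. v \<in> e} \<Longrightarrow> \<exists>x\<in>nb v. y = {v, x}"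
    proof -
      fix y assume "y \<in> {e \<in> E. v \<in> e}"
      then obtain a b where "y = {a, b}" "y \<in> E" "v \<in> y" using edge by blast
      then show "\<exists>x\<in>nb v. y = {v, x}" unfolding nb_def by (auto simp: insert_commute)
    qed
  qed
  then show ?thesis by (rule bij_betw_same_card)
qed

definition C :: "'a \<Rightarrow> 'a \<Rightarrow> 'a set" where "C p v = nb v - {p}"
definition hv :: "'a \<Rightarrow> 'a \<Rightarrow> 'a" where
  "hv p v = (SOME h. h \<in> C p v \<and> (\<forall>w\<in>C p v. card (Br v w) \<le> card (Br v h)))"
definition Cb :: "bool \<Rightarrow> 'a \<Rightarrow> 'a \<Rightarrow> 'a set" where
  "Cb b p v = (if b then C p v - {hv p v} else C p v)"
definition xb :: "bool \<Rightarrow> 'a \<Rightarrow> 'a \<Rightarrow> bool" where "xb b p v \<longleftrightarrow> b \<and> C p v \<noteq> {}"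

lemma fin_C: "finite (C p v)" unfolding C_def using fin_nb by simp
lemma C_V: "C p v \<subseteq> V" unfolding C_def using nb_V[of v] by (rule subset_trans[OF Diff_subset])
lemma C_edge: "w \<in> C p v \<Longrightarrow> {v, w} \<in> E" unfolding C_def nb_def by simp
lemma Cb_C: "Cb b p v \<subseteq> C p v" unfolding Cb_def by auto

lemma Cb_Cm: "w \<in> Cb b p v \<Longrightarrow> w \<in> C p v" using Cb_C[of b p v] by (rule subsetD)
lemma C_Vm: "w \<in> C p v \<Longrightarrow> w \<in> V" using C_V[of p v] by (rule subsetD)
lemma Cb_Vm: "w \<in> Cb b p v \<Longrightarrow> w \<in> V" by (rule C_Vm[OF Cb_Cm])
lemma fin_Cb: "finite (Cb b p v)" by (rule finite_subset[OF Cb_C fin_C])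
lemma card_Cb: "card (Cb b p v) \<le> card (C p v)" by (rule card_mono[OF fin_C Cb_C])

lemma hv_prop:
  assumes "C p v \<noteq> {}"
  shows "hv p v \<in> C p v" "\<And>w. w \<in> C p v \<Longrightarrow> card (Br v w) \<le> card (Br v (hv p v))"
proof -
  obtain h where h: "h \<in> C p v" "card (Br v h) = Max ((\<lambda>w. card (Br v w)) ` C p v)"
    using Max_in[of "(\<lambda>w. card (Br v w)) ` C p v"] fin_C assms by fastforce
  have "h \<in> C p v \<and> (\<forall>w\<in>C p v. card (Br v w) \<le> card (Br v h))"
    using h fin_C by auto
  then have "hv p v \<in> C p v \<and> (\<forall>w\<in>C p v. card (Br v w) \<le> card (Br v (hv p v)))"
    unfolding hv_def by (rule someI)
  then show "hv p v \<in> C p v" "\<And>w. w \<in> C p v \<Longrightarrow> card (Br v w) \<le> card (Br v (hv p v))" by auto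
qed

lemma xb_split:
  assumes "xb b p v"
  shows "hv p v \<in> C p v" "C p v = insert (hv p v) (Cb b p v)" "hv p v \<notin> Cb b p v"
  using assms hv_prop unfolding xb_def Cb_def by auto

lemma nxb_split: "\<not> xb b p v \<Longrightarrow> Cb b p v = C p v"
  unfolding xb_def Cb_def by auto

lemma Br_decompC: "v \<in> V \<Longrightarrow> Br p v = insert v (\<Union>w\<in>C p v. Br v w)"
  unfolding C_def by (rule Br_decomp)

lemma Br_disjC: "w1 \<in> C p v \<Longrightarrow> w2 \<in> C p v \<Longrightarrow> w1 \<noteq> w2 \<Longrightarrow> Br v w1 \<inter> Br v w2 = {}"
  unfolding C_def by (rule Br_disj) auto

lemma v_notin_BrC: "w \<in> C p v \<Longrightarrow> v \<notin> Br v w"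
  by (rule v_notin_Br[OF C_edge])

lemma card_Br_sum:
  assumes "v \<in> V"
  shows "card (Br p v) = 1 + (\<Sum>w\<in>C p v. card (Br v w))"
proof -
  have "card (\<Union>w\<in>C p v. Br v w) = (\<Sum>w\<in>C p v. card (Br v w))"
    by (rule card_UN_disjoint) (use fin_C fin_Br Br_disjC in auto)
  moreover have "v \<notin> (\<Union>w\<in>C p v. Br v w)" using v_notin_BrC by blast
  ultimately show ?thesis using Br_decompC[OF assms] fin_Br
    by (metis card_insert_disjoint finite_UN_I fin_C plus_1_eq_Suc)
qed

lemma card_Br_child:
  assumes "v \<in> V" "w \<in> C p v"
  shows "card (Br v w) < card (Br p v)"
proof -
  have "Br v w \<subseteq> Br p v - {v}" using Br_decompC[OF assms(1)] assms(2) v_notin_BrC[OF assms(2)] by blast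
  then have "card (Br v w) \<le> card (Br p v - {v})" by (intro card_mono) (use fin_Br in auto)
  also have "\<dots> < card (Br p v)" using v_Br[OF assms(1)] fin_Br by (meson card_Diff1_less)
  finally show ?thesis .
qed

fun Sinc :: "nat \<Rightarrow> bool \<Rightarrow> 'a \<Rightarrow> 'a \<Rightarrow> 'a set" where
  "Sinc 0 b p v = Br p v"
| "Sinc (Suc l) b p v = insert v (\<Union>w\<in>Cb b p v. Sinc l (\<not> b) v w)"

fun Fset :: "nat \<Rightarrow> bool \<Rightarrow> 'a \<Rightarrow> 'a \<Rightarrow> 'a set" where
  "Fset 0 b p v = {}"
| "Fset (Suc l) b p v = (if xb b p v then Br v (hv p v) else {}) \<union> (\<Union>w\<in>Cb b p v. Fset l (\<not> b) v w)"

fun Mset :: "nat \<Rightarrow> bool \<Rightarrow> 'a \<Rightarrow> 'a \<Rightarrow> 'a set set" where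
  "Mset 0 b p v = {}"
| "Mset (Suc l) b p v = (if xb b p v then {{v, hv p v}} else {}) \<union> (\<Union>w\<in>Cb b p v. Mset l (\<not> b) v w)"

fun Kset :: "nat \<Rightarrow> bool \<Rightarrow> 'a \<Rightarrow> 'a \<Rightarrow> 'a set" where
  "Kset 0 b p v = {}"
| "Kset (Suc l) b p v = insert v (\<Union>w\<in>Cb b p v. Kset l (\<not> b) v w)"

fun Col :: "nat \<Rightarrow> bool \<Rightarrow> 'a \<Rightarrow> 'a \<Rightarrow> 'a set" where
  "Col 0 b p v = {}"
| "Col (Suc l) b p v = (if b then {v} else {}) \<union> (\<Union>w\<in>C p v. Col l (\<not> b) v w)"

lemma part:
  "v \<in> V \<Longrightarrow> Sinc l b p v \<union> Fset l b p v = Br p v \<and> Sinc l b p v \<inter> Fset l b p v = {} \<and> v \<in> Sinc l b p v"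
proof (induction l arbitrary: b p v)
  case 0
  then show ?case using v_Br by simp
next
  case (Suc l)
  let ?X = "if xb b p v then Br v (hv p v) else {}"
  have IH: "\<And>w. w \<in> Cb b p v \<Longrightarrow> Sinc l (\<not> b) v w \<union> Fset l (\<not> b) v w = Br v w \<and>
      Sinc l (\<not> b) v w \<inter> Fset l (\<not> b) v w = {} \<and> w \<in> Sinc l (\<not> b) v w"
    using Suc.IH C_V Cb_C by blast
  have BrX: "Br p v = insert v ((\<Union>w\<in>Cb b p v. Br v w) \<union> ?X)"
  proof (cases "xb b p v")
    case True
    show ?thesis using Br_decompC[OF Suc.prems, of p] xb_split[OF True] True by auto
  next
    case False
    show ?thesis using Br_decompC[OF Suc.prems, of p] nxb_split[OF False] False by auto
  qed
  have vX: "v \<notin> ?X"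
  proof (cases "xb b p v")
    case True then show ?thesis using v_notin_BrC[OF xb_split(1)[OF True]] by simp
  qed simp
  have dX: "\<And>w. w \<in> Cb b p v \<Longrightarrow> Br v w \<inter> ?X = {}"
  proof -
    fix w assume w: "w \<in> Cb b p v"
    show "Br v w \<inter> ?X = {}"
    proof (cases "xb b p v")
      case True
      have ne: "w \<noteq> hv p v" using w xb_split(3)[OF True] by blast
      have wC: "w \<in> C p v" using w Cb_C by blast
      show ?thesis using Br_disjC[OF wC xb_split(1)[OF True] ne] True by simp
    qed simp
  qed
  have dW: "\<And>w w'. w \<in> Cb b p v \<Longrightarrow> w' \<in> Cb b p v \<Longrightarrow> w \<noteq> w' \<Longrightarrow> Br v w \<inter> Br v w' = {}"
    using Br_disjC Cb_C by blast
  have vW: "\<And>w. w \<in> Cb b p v \<Longrightarrow> v \<notin> Br v w" using v_notin_BrC Cb_C by blast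
  show ?case
  proof (intro conjI)
    have U: "(\<Union>w\<in>Cb b p v. Br v w) = (\<Union>w\<in>Cb b p v. Sinc l (\<not> b) v w \<union> Fset l (\<not> b) v w)"
      using IH by (intro SUP_cong) auto
    show "Sinc (Suc l) b p v \<union> Fset (Suc l) b p v = Br p v"
      unfolding BrX U by auto
    show "v \<in> Sinc (Suc l) b p v" by simp
    show "Sinc (Suc l) b p v \<inter> Fset (Suc l) b p v = {}"
    proof (rule ccontr)
      assume "Sinc (Suc l) b p v \<inter> Fset (Suc l) b p v \<noteq> {}"
      then obtain x where xS: "x \<in> Sinc (Suc l) b p v" and xF: "x \<in> Fset (Suc l) b p v" by blast
      have xS': "x = v \<or> (\<exists>w\<in>Cb b p v. x \<in> Sinc l (\<not> b) v w)" using xS by simp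
      have xF': "x \<in> ?X \<or> (\<exists>w\<in>Cb b p v. x \<in> Fset l (\<not> b) v w)" using xF by simp
      show False
      proof (cases "x = v")
        case True
        then show ?thesis using xF' vX vW IH by blast
      next
        case False
        then obtain w where w: "w \<in> Cb b p v" "x \<in> Sinc l (\<not> b) v w" using xS' by blast
        then have xw: "x \<in> Br v w" using IH by blast
        from xF' show ?thesis
        proof
          assume "x \<in> ?X" then show False using dX[OF w(1)] xw by blast
        next
          assume "\<exists>w'\<in>Cb b p v. x \<in> Fset l (\<not> b) v w'"
          then obtain w' where w': "w' \<in> Cb b p v" "x \<in> Fset l (\<not> b) v w'" by blast
          then have "x \<in> Br v w'" using IH by blast
          then have "w = w'" using dW[OF w(1) w'(1)] xw by blast
          then show False using IH[OF w(1)] w w' by blast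
        qed
      qed
    qed
  qed
qed


lemma matching_UN:
  assumes "\<And>i. i \<in> I \<Longrightarrow> matching (M i)" "\<And>i. i \<in> I \<Longrightarrow> \<Union>(M i) \<subseteq> B i"
    "\<And>i j. i \<in> I \<Longrightarrow> j \<in> I \<Longrightarrow> i \<noteq> j \<Longrightarrow> B i \<inter> B j = {}"
  shows "matching (\<Union>i\<in>I. M i)"
  unfolding matching_def
proof (intro ballI impI)
  fix e e' assume e: "e \<in> (\<Union>i\<in>I. M i)" and e': "e' \<in> (\<Union>i\<in>I. M i)" and ne: "e \<noteq> e'"
  then obtain i j where ij: "i \<in> I" "j \<in> I" "e \<in> M i" "e' \<in> M j" by blast
  show "e \<inter> e' = {}"
  proof (cases "i = j")
    case True then show ?thesis using assms(1)[OF ij(1)] ij ne unfolding matching_def by blast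
  next
    case False
    have "e \<subseteq> B i" "e' \<subseteq> B j" using assms(2) ij by blast+
    then show ?thesis using assms(3)[OF ij(1,2) False] by blast
  qed
qed

lemma matching_Un1:
  assumes "matching M" "e \<inter> \<Union>M = {}"
  shows "matching ({e} \<union> M)"
  using assms unfolding matching_def by blast

lemma matching_empty: "matching {}" unfolding matching_def by blast

lemma edges_inv:
  "v \<in> V \<Longrightarrow> \<forall>e\<in>E. e \<subseteq> Br p v \<longrightarrow> e \<subseteq> Sinc l b p v \<or> e \<subseteq> Fset l b p v \<or> e \<in> Mset l b p v"
proof (induction l arbitrary: b p v)
  case 0 then show ?case by simp
next
  case (Suc l)
  show ?case
  proof (intro ballI impI)
    fix e assume eE: "e \<in> E" and eB: "e \<subseteq> Br p v"
    obtain x y where exy: "e = {x, y}" "x \<noteq> y" using edge[OF eE] by blast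
    show "e \<subseteq> Sinc (Suc l) b p v \<or> e \<subseteq> Fset (Suc l) b p v \<or> e \<in> Mset (Suc l) b p v"
    proof (cases "v \<in> e")
      case True
      then obtain w where ew: "e = {v, w}" using exy by (auto simp: doubleton_eq_iff insert_commute)
      have "w \<in> nb v" using eE ew unfolding nb_def by simp
      moreover have "w \<noteq> p"
      proof
        assume "w = p"
        then have "{p, v} \<in> E" using eE ew by (simp add: insert_commute)
        then show False using p_notin_Br eB ew \<open>w = p\<close> by blast
      qed
      ultimately have wC: "w \<in> C p v" unfolding C_def by simp
      show ?thesis
      proof (cases "w \<in> Cb b p v")
        case True
        then have "w \<in> Sinc l (\<not> b) v w" using part[of w l "\<not> b" v] C_V Cb_C by blast
        then have "e \<subseteq> Sinc (Suc l) b p v" using True ew by auto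
        then show ?thesis by blast
      next
        case False
        then have "xb b p v" using nxb_split wC by blast
        moreover then have "w = hv p v" using xb_split False wC by blast
        ultimately show ?thesis using ew by simp
      qed
    next
      case False
      have "x \<in> Br p v" using eB exy by blast
      moreover have "x \<noteq> v" using False exy by blast
      ultimately obtain w where wC: "w \<in> C p v" and xw: "x \<in> Br v w"
        using Br_decompC[OF Suc.prems, of p] by blast
      have "{x, y} \<noteq> {v, w}" using False exy by blast
      then have yw: "y \<in> Br v w" using Br_closed[OF xw] eE exy by blast
      have eBw: "e \<subseteq> Br v w" using xw yw exy by blast
      show ?thesis
      proof (cases "w \<in> Cb b p v")
        case True
        then have "e \<subseteq> Sinc l (\<not> b) v w \<or> e \<subseteq> Fset l (\<not> b) v w \<or> e \<in> Mset l (\<not> b) v w"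
          using Suc.IH[of w] C_V wC eE eBw by blast
        then show ?thesis using True by auto
      next
        case False
        then have "xb b p v" using nxb_split wC by blast
        moreover then have "w = hv p v" using xb_split False wC by blast
        ultimately show ?thesis using eBw by auto
      qed
    qed
  qed
qed

lemma S_conn:
  "v \<in> V \<Longrightarrow> \<forall>x\<in>Sinc l b p v. reach {e \<in> E. e \<subseteq> Sinc l b p v} v x"
proof (induction l arbitrary: b p v)
  case 0 then show ?case using Br_reach_in by simp
next
  case (Suc l)
  show ?case
  proof
    fix x assume "x \<in> Sinc (Suc l) b p v"
    then consider "x = v" | w where "w \<in> Cb b p v" "x \<in> Sinc l (\<not> b) v w" by auto
    then show "reach {e \<in> E. e \<subseteq> Sinc (Suc l) b p v} v x"
    proof cases
      case 1 then show ?thesis by simp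
    next
      case 2
      have wC: "w \<in> C p v" using 2 Cb_C by blast
      have wV: "w \<in> V" using wC C_V by blast
      have sub: "Sinc l (\<not> b) v w \<subseteq> Sinc (Suc l) b p v" using 2 by auto
      have "reach {e \<in> E. e \<subseteq> Sinc l (\<not> b) v w} w x" using Suc.IH[OF wV] 2 by blast
      then have r: "reach {e \<in> E. e \<subseteq> Sinc (Suc l) b p v} w x"
        by (rule reach_mono[rotated]) (use sub in blast)
      have "w \<in> Sinc l (\<not> b) v w" using part[OF wV] by blast
      then have "{v, w} \<in> {e \<in> E. e \<subseteq> Sinc (Suc l) b p v}" using sub C_edge[OF wC] by auto
      then show ?thesis using reach_trans[OF reach_edge r] by simp
    qed
  qed
qed

lemma K_inv:
  "v \<in> V \<Longrightarrow> Kset l b p v \<subseteq> Sinc l b p v \<and> (0 < l \<longrightarrow> v \<in> Kset l b p v) \<and>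
    (\<forall>x\<in>Kset l b p v. reach {e \<in> E. e \<subseteq> Kset l b p v} v x)"
proof (induction l arbitrary: b p v)
  case 0 then show ?case by simp
next
  case (Suc l)
  have IH: "\<And>w. w \<in> Cb b p v \<Longrightarrow> Kset l (\<not> b) v w \<subseteq> Sinc l (\<not> b) v w \<and> (0 < l \<longrightarrow> w \<in> Kset l (\<not> b) v w) \<and>
    (\<forall>x\<in>Kset l (\<not> b) v w. reach {e \<in> E. e \<subseteq> Kset l (\<not> b) v w} w x)"
    using Suc.IH C_V Cb_C by blast
  show ?case
  proof (intro conjI)
    show "Kset (Suc l) b p v \<subseteq> Sinc (Suc l) b p v" using IH by auto
    show "0 < Suc l \<longrightarrow> v \<in> Kset (Suc l) b p v" by simp
    show "\<forall>x\<in>Kset (Suc l) b p v. reach {e \<in> E. e \<subseteq> Kset (Suc l) b p v} v x"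
    proof
      fix x assume "x \<in> Kset (Suc l) b p v"
      then consider "x = v" | w where "w \<in> Cb b p v" "x \<in> Kset l (\<not> b) v w" by auto
      then show "reach {e \<in> E. e \<subseteq> Kset (Suc l) b p v} v x"
      proof cases
        case 1 then show ?thesis by simp
      next
        case 2
        have wC: "w \<in> C p v" using 2 Cb_C by blast
        have sub: "Kset l (\<not> b) v w \<subseteq> Kset (Suc l) b p v" using 2 by auto
        have "0 < l" using 2 by (cases l) auto
        then have wK: "w \<in> Kset l (\<not> b) v w" using IH[OF 2(1)] by blast
        have "reach {e \<in> E. e \<subseteq> Kset l (\<not> b) v w} w x" using IH[OF 2(1)] 2 by blast
        then have r: "reach {e \<in> E. e \<subseteq> Kset (Suc l) b p v} w x"
          by (rule reach_mono[rotated]) (use sub in blast)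
        have "{v, w} \<in> {e \<in> E. e \<subseteq> Kset (Suc l) b p v}" using sub wK C_edge[OF wC] by auto
        then show ?thesis using reach_trans[OF reach_edge r] by simp
      qed
    qed
  qed
qed

lemma F_pieces:
  "v \<in> V \<Longrightarrow> \<forall>x\<in>Fset l b p v. \<exists>a c. {a, c} \<in> E \<and> x \<in> Br a c \<and> Br a c \<subseteq> Fset l b p v \<and>
      a \<in> Sinc l b p v \<and> card (Br a c) < card (Br p v)"
proof (induction l arbitrary: b p v)
  case 0 then show ?case by simp
next
  case (Suc l)
  show ?case
  proof
    fix x assume "x \<in> Fset (Suc l) b p v"
    then consider "xb b p v" "x \<in> Br v (hv p v)" | w where "w \<in> Cb b p v" "x \<in> Fset l (\<not> b) v w"
      by (auto split: if_splits)
    then show "\<exists>a c. {a, c} \<in> E \<and> x \<in> Br a c \<and> Br a c \<subseteq> Fset (Suc l) b p v \<and>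
      a \<in> Sinc (Suc l) b p v \<and> card (Br a c) < card (Br p v)"
    proof cases
      case 1
      have hC: "hv p v \<in> C p v" using xb_split(1)[OF 1(1)] .
      show ?thesis
        apply (rule exI[of _ v], rule exI[of _ "hv p v"])
        using 1 C_edge[OF hC] card_Br_child[OF Suc.prems hC] by auto
    next
      case 2
      have wC: "w \<in> C p v" using 2 Cb_C by blast
      have wV: "w \<in> V" using wC C_V by blast
      obtain a c where ac: "{a, c} \<in> E" "x \<in> Br a c" "Br a c \<subseteq> Fset l (\<not> b) v w"
        "a \<in> Sinc l (\<not> b) v w" "card (Br a c) < card (Br v w)"
        using Suc.IH[OF wV] 2 by blast
      have cc: "card (Br a c) < card (Br p v)" using ac(5) card_Br_child[OF Suc.prems wC] by linarith
      have s1: "Fset l (\<not> b) v w \<subseteq> Fset (Suc l) b p v" using 2(1) by auto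
      have s2: "Sinc l (\<not> b) v w \<subseteq> Sinc (Suc l) b p v" using 2(1) by auto
      have "Br a c \<subseteq> Fset (Suc l) b p v" "a \<in> Sinc (Suc l) b p v" using ac(3,4) s1 s2 by blast+
      then show ?thesis using ac(1,2) cc by blast
    qed
  qed
qed

lemma M_inv:
  assumes "\<And>x y. {x, y} \<in> E \<Longrightarrow> col x \<noteq> col y"
  shows "v \<in> V \<Longrightarrow> col v = b \<Longrightarrow> matching (Mset l b p v) \<and>
    (\<forall>e\<in>Mset l b p v. \<exists>a h. e = {a, h} \<and> e \<in> E \<and> a \<in> Sinc l b p v \<and> h \<in> Fset l b p v \<and>
         a \<in> Kset l b p v \<and> col a)"
proof (induction l arbitrary: b p v)
  case 0 then show ?case by (simp add: matching_empty)
next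
  case (Suc l)
  have IH: "\<And>w. w \<in> Cb b p v \<Longrightarrow> matching (Mset l (\<not> b) v w) \<and>
    (\<forall>e\<in>Mset l (\<not> b) v w. \<exists>a h. e = {a, h} \<and> e \<in> E \<and> a \<in> Sinc l (\<not> b) v w \<and> h \<in> Fset l (\<not> b) v w \<and>
         a \<in> Kset l (\<not> b) v w \<and> col a)"
  proof -
    fix w assume w: "w \<in> Cb b p v"
    have wC: "w \<in> C p v" using w Cb_C by blast
    have "col w = (\<not> b)" using assms[OF C_edge[OF wC]] Suc.prems(2) by blast
    then show "?thesis w" by (rule Suc.IH[of w "\<not> b", OF C_Vm[OF wC]])
  qed
  have subB: "\<And>w. w \<in> Cb b p v \<Longrightarrow> \<Union>(Mset l (\<not> b) v w) \<subseteq> Br v w"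
  proof -
    fix w assume w: "w \<in> Cb b p v"
    have wV: "w \<in> V" by (rule Cb_Vm[OF w])
    show "\<Union>(Mset l (\<not> b) v w) \<subseteq> Br v w"
    proof
      fix x assume "x \<in> \<Union>(Mset l (\<not> b) v w)"
      then obtain e where e: "e \<in> Mset l (\<not> b) v w" "x \<in> e" by blast
      obtain a h where ah: "e = {a, h}" "a \<in> Sinc l (\<not> b) v w" "h \<in> Fset l (\<not> b) v w"
        using IH[OF w] e(1) by blast
      have "Sinc l (\<not> b) v w \<union> Fset l (\<not> b) v w = Br v w" using part[OF wV, of l "\<not> b" v] by blast
      then show "x \<in> Br v w" using ah e(2) by blast
    qed
  qed
  have mU: "matching (\<Union>w\<in>Cb b p v. Mset l (\<not> b) v w)"
  proof (rule matching_UN[where B="\<lambda>w. Br v w"])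
    show "\<And>i. i \<in> Cb b p v \<Longrightarrow> matching (Mset l (\<not> b) v i)" using IH by blast
    show "\<And>i. i \<in> Cb b p v \<Longrightarrow> \<Union>(Mset l (\<not> b) v i) \<subseteq> Br v i" by (rule subB)
    show "\<And>i j. i \<in> Cb b p v \<Longrightarrow> j \<in> Cb b p v \<Longrightarrow> i \<noteq> j \<Longrightarrow> Br v i \<inter> Br v j = {}"
      by (rule Br_disjC[OF Cb_Cm Cb_Cm])
  qed
  have mM: "matching (Mset (Suc l) b p v)"
  proof (cases "xb b p v")
    case False then show ?thesis using mU by simp
  next
    case True
    have hC: "hv p v \<in> C p v" "hv p v \<notin> Cb b p v" using xb_split True by auto
    have "{v, hv p v} \<inter> \<Union>(\<Union>w\<in>Cb b p v. Mset l (\<not> b) v w) = {}"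
    proof -
      have "v \<notin> Br v w" "hv p v \<notin> Br v w" if "w \<in> Cb b p v" for w
      proof -
        show "v \<notin> Br v w" by (rule v_notin_BrC[OF Cb_Cm[OF that]])
        have ne: "w \<noteq> hv p v" using that hC(2) by blast
        have "Br v w \<inter> Br v (hv p v) = {}" by (rule Br_disjC[OF Cb_Cm[OF that] hC(1) ne])
        moreover have "hv p v \<in> Br v (hv p v)" by (rule v_Br[OF C_Vm[OF hC(1)]])
        ultimately show "hv p v \<notin> Br v w" by blast
      qed
      then show ?thesis using subB by blast
    qed
    then show ?thesis using matching_Un1[OF mU] True by simp
  qed
  show ?case
  proof (intro conjI mM ballI)
    fix e assume "e \<in> Mset (Suc l) b p v"
    then consider "xb b p v" "e = {v, hv p v}" | w where "w \<in> Cb b p v" "e \<in> Mset l (\<not> b) v w"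
      by (auto split: if_splits)
    then show "\<exists>a h. e = {a, h} \<and> e \<in> E \<and> a \<in> Sinc (Suc l) b p v \<and> h \<in> Fset (Suc l) b p v \<and>
         a \<in> Kset (Suc l) b p v \<and> col a"
    proof cases
      case 1
      have hC: "hv p v \<in> C p v" using xb_split 1 by auto
      have hB: "hv p v \<in> Br v (hv p v)" by (rule v_Br[OF C_Vm[OF hC]])
      have cv: "col v" using 1 Suc.prems(2) unfolding xb_def by simp
      show ?thesis
        apply (rule exI[of _ v], rule exI[of _ "hv p v"])
        using hB cv 1 C_edge[OF hC] by auto
    next
      case 2
      obtain a h where ah: "e = {a, h}" "e \<in> E" "a \<in> Sinc l (\<not> b) v w" "h \<in> Fset l (\<not> b) v w"
         "a \<in> Kset l (\<not> b) v w" "col a" using IH[OF 2(1)] 2(2) by blast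
      have "a \<in> Sinc (Suc l) b p v" "h \<in> Fset (Suc l) b p v" "a \<in> Kset (Suc l) b p v"
        using ah(3,4,5) 2(1) by auto
      then show ?thesis using ah(1,2,6) by blast
    qed
  qed
qed


lemma card_C_le:
  assumes "\<forall>u\<in>V. card (nb u) \<le> D" "v \<in> V"
  shows "card (C p v) \<le> D" "{p, v} \<in> E \<Longrightarrow> card (C p v) + 1 \<le> D"
proof -
  show "card (C p v) \<le> D" unfolding C_def using assms fin_nb
    by (meson card_Diff1_le le_trans)
  assume "{p, v} \<in> E"
  then have "p \<in> nb v" unfolding nb_def by (simp add: insert_commute)
  then show "card (C p v) + 1 \<le> D" unfolding C_def using assms fin_nb
    by (metis card_Diff1_less Suc_eq_plus1 Suc_leI le_trans)
qed

lemma K_card: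
  assumes deg: "\<forall>u\<in>V. card (nb u) \<le> D" and D2: "2 \<le> D"
  shows "v \<in> V \<Longrightarrow> card (Kset l b p v) \<le> (if {p, v} \<in> E then D ^ l else D ^ (l + 1))"
proof (induction l arbitrary: b p v)
  case 0 then show ?case by simp
next
  case (Suc l)
  have IH: "\<And>w. w \<in> Cb b p v \<Longrightarrow> card (Kset l (\<not> b) v w) \<le> D ^ l"
  proof -
    fix w assume w: "w \<in> Cb b p v"
    then have wC: "w \<in> C p v" using Cb_C by blast
    have "card (Kset l (\<not> b) v w) \<le> (if {v, w} \<in> E then D ^ l else D ^ (l + 1))"
      using Suc.IH[of w "\<not> b" v, OF C_Vm[OF wC]] .
    then show "card (Kset l (\<not> b) v w) \<le> D ^ l" using C_edge[OF wC] by simp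
  qed
  have fCb: "finite (Cb b p v)" by (rule fin_Cb)
  have "card (Kset (Suc l) b p v) \<le> 1 + card (\<Union>w\<in>Cb b p v. Kset l (\<not> b) v w)"
    by (simp add: card_insert_le_m1) 
  also have "\<dots> \<le> 1 + (\<Sum>w\<in>Cb b p v. card (Kset l (\<not> b) v w))"
    using card_UN_le[OF fCb] by simp
  also have "\<dots> \<le> 1 + card (Cb b p v) * D ^ l"
    using sum_bounded_above[of "Cb b p v" "\<lambda>w. card (Kset l (\<not> b) v w)" "D ^ l"] IH by simp
  also have "\<dots> \<le> (if {p, v} \<in> E then D ^ Suc l else D ^ (Suc l + 1))"
  proof -
    have cC: "card (Cb b p v) \<le> card (C p v)" by (rule card_Cb)
    have pos: "1 \<le> D ^ l" using D2 by simp
    show ?thesis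
    proof (cases "{p, v} \<in> E")
      case True
      then have "card (Cb b p v) + 1 \<le> D" using card_C_le(2)[OF deg Suc.prems True] cC by linarith
      then have "(card (Cb b p v) + 1) * D ^ l \<le> D * D ^ l" by (rule mult_right_mono) simp
      then have "card (Cb b p v) * D ^ l + D ^ l \<le> D * D ^ l" by (simp add: algebra_simps)
      then show ?thesis using True pos by simp
    next
      case False
      then have "card (Cb b p v) \<le> D" using card_C_le(1)[OF deg Suc.prems, of p] cC by linarith
      then have "card (Cb b p v) * D ^ l \<le> D * D ^ l" by (rule mult_right_mono) simp
      moreover have "1 + D * D ^ l \<le> D * (D * D ^ l)"
      proof -
        have x1: "1 \<le> D * D ^ l" using pos D2 by (simp add: Suc_le_eq)
        have "2 * (D * D ^ l) \<le> D * (D * D ^ l)" using D2 by (rule mult_right_mono) simp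
        then show ?thesis using x1 by linarith
      qed
      ultimately have "1 + card (Cb b p v) * D ^ l \<le> D * (D * D ^ l)" by linarith
      then show ?thesis using False by simp
    qed
  qed
  finally show ?case .
qed

lemma card_insert_le_m1': "card (insert x A) \<le> 1 + card A"
  by (cases "finite A") (auto simp: card_insert_if)

lemma heavy_sum:
  assumes deg: "\<forall>u\<in>V. card (nb u) \<le> D" and D1: "1 \<le> D" and vV: "v \<in> V"
  shows "real (\<Sum>w\<in>Cb True p v. card (Br v w)) \<le> (1 - 1 / real D) * real (\<Sum>w\<in>C p v. card (Br v w))"
proof (cases "C p v = {}")
  case True
  then show ?thesis unfolding Cb_def by simp
next
  case False
  have xb: "xb True p v" using False unfolding xb_def by simp
  let ?h = "hv p v"
  let ?f = "\<lambda>w. card (Br v w)"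
  have split: "(\<Sum>w\<in>C p v. ?f w) = ?f ?h + (\<Sum>w\<in>Cb True p v. ?f w)"
    using xb_split[OF xb] fin_C by (metis finite_insert sum.insert)
  have "(\<Sum>w\<in>C p v. ?f w) \<le> card (C p v) * ?f ?h"
    using sum_bounded_above[of "C p v" ?f "?f ?h"] hv_prop[OF False] by simp
  also have "\<dots> \<le> D * ?f ?h" using card_C_le[OF deg vV] by simp
  finally have "real (\<Sum>w\<in>C p v. ?f w) \<le> real D * real (?f ?h)" by (metis of_nat_le_iff of_nat_mult)
  then have "real (\<Sum>w\<in>C p v. ?f w) / real D \<le> real (?f ?h)" using D1
    by (simp add: divide_le_eq mult.commute)
  moreover have "real (\<Sum>w\<in>C p v. ?f w) = real (?f ?h) + real (\<Sum>w\<in>Cb True p v. ?f w)"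
    using split by simp
  moreover have "(1 - 1 / real D) * real (\<Sum>w\<in>C p v. ?f w) = real (\<Sum>w\<in>C p v. ?f w) - real (\<Sum>w\<in>C p v. ?f w) / real D"
    by (simp add: algebra_simps)
  ultimately show ?thesis by linarith
qed

lemma S_card:
  assumes deg: "\<forall>u\<in>V. card (nb u) \<le> D" and D1: "1 \<le> D"
  shows "v \<in> V \<Longrightarrow> real (card (Sinc l b p v)) \<le>
    (1 - 1 / real D) ^ (if b then (l + 1) div 2 else l div 2) * real (card (Br p v)) + real (D + 1) ^ l"
proof (induction l arbitrary: b p v)
  case 0 then show ?case by simp
next
  case (Suc l)
  define \<rho> where "\<rho> = 1 - 1 / real D"
  have \<rho>0: "0 \<le> \<rho>" unfolding \<rho>_def using D1 by simp
  define \<theta> where "\<theta> = \<rho> ^ (if \<not> b then (l + 1) div 2 else l div 2)"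
  have \<theta>0: "0 \<le> \<theta>" unfolding \<theta>_def using \<rho>0 by simp
  have IH: "\<And>w. w \<in> Cb b p v \<Longrightarrow> real (card (Sinc l (\<not> b) v w)) \<le> \<theta> * real (card (Br v w)) + real (D + 1) ^ l"
    unfolding \<theta>_def \<rho>_def by (rule Suc.IH[OF Cb_Vm])
  have fCb: "finite (Cb b p v)" by (rule fin_Cb)
  have cCb: "card (Cb b p v) \<le> D" using card_Cb[of b p v] card_C_le(1)[OF deg Suc.prems, of p] by linarith
  have "card (Sinc (Suc l) b p v) \<le> 1 + card (\<Union>w\<in>Cb b p v. Sinc l (\<not> b) v w)"
    unfolding Sinc.simps by (rule card_insert_le_m1')
  also have "\<dots> \<le> 1 + (\<Sum>w\<in>Cb b p v. card (Sinc l (\<not> b) v w))"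
    using card_UN_le[OF fCb] by simp
  finally have "real (card (Sinc (Suc l) b p v)) \<le> real (1 + (\<Sum>w\<in>Cb b p v. card (Sinc l (\<not> b) v w)))"
    by (rule of_nat_mono)
  also have "\<dots> = 1 + (\<Sum>w\<in>Cb b p v. real (card (Sinc l (\<not> b) v w)))" by simp
  also have "\<dots> \<le> 1 + (\<Sum>w\<in>Cb b p v. \<theta> * real (card (Br v w)) + real (D + 1) ^ l)"
    using sum_mono[of "Cb b p v", OF IH] by simp
  also have "\<dots> = 1 + \<theta> * real (\<Sum>w\<in>Cb b p v. card (Br v w)) + real (card (Cb b p v)) * real (D + 1) ^ l"
    by (simp add: sum.distrib sum_distrib_left)
  also have "\<dots> \<le> \<rho> ^ (if b then (Suc l + 1) div 2 else Suc l div 2) * real (card (Br p v)) + real (D + 1) ^ Suc l"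
  proof -
    have A: "1 + real (card (Cb b p v)) * real (D + 1) ^ l \<le> real (D + 1) ^ Suc l"
    proof -
      have "real (card (Cb b p v)) * real (D + 1) ^ l \<le> real D * real (D + 1) ^ l"
        using cCb by (intro mult_right_mono) auto
      moreover have "1 \<le> real (D + 1) ^ l" by simp
      moreover have "real (D + 1) ^ Suc l = real (D + 1) ^ l + real D * real (D + 1) ^ l"
        by (simp add: algebra_simps)
      ultimately show ?thesis by linarith
    qed
    have sumC: "real (\<Sum>w\<in>C p v. card (Br v w)) \<le> real (card (Br p v))"
      using card_Br_sum[OF Suc.prems, of p] by simp
    have B: "\<theta> * real (\<Sum>w\<in>Cb b p v. card (Br v w)) \<le> \<rho> ^ (if b then (Suc l + 1) div 2 else Suc l div 2) * real (card (Br p v))"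
    proof (cases b)
      case True
      have "\<theta> * real (\<Sum>w\<in>Cb b p v. card (Br v w)) \<le> \<theta> * (\<rho> * real (\<Sum>w\<in>C p v. card (Br v w)))"
        using heavy_sum[OF deg D1 Suc.prems, of p] True \<theta>0 unfolding \<rho>_def by (intro mult_left_mono) auto
      also have "\<dots> \<le> \<theta> * (\<rho> * real (card (Br p v)))"
        using sumC \<theta>0 \<rho>0 by (intro mult_left_mono) auto
      also have "\<dots> = \<rho> ^ (if b then (Suc l + 1) div 2 else Suc l div 2) * real (card (Br p v))"
        unfolding \<theta>_def using True by simp
      finally show ?thesis .
    next
      case False
      then have "Cb b p v = C p v" unfolding Cb_def by simp
      then have "\<theta> * real (\<Sum>w\<in>Cb b p v. card (Br v w)) \<le> \<theta> * real (card (Br p v))"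
        using sumC \<theta>0 by (intro mult_left_mono) auto
      also have "\<dots> = \<rho> ^ (if b then (Suc l + 1) div 2 else Suc l div 2) * real (card (Br p v))"
        unfolding \<theta>_def using False by simp
      finally show ?thesis .
    qed
    show ?thesis using A B by linarith
  qed
  finally show ?case unfolding \<rho>_def .
qed

lemma Col_inv:
  "v \<in> V \<Longrightarrow> card (Br p v) \<le> l \<Longrightarrow> Col l b p v \<subseteq> Br p v \<and> (v \<in> Col l b p v \<longleftrightarrow> b) \<and>
    (\<forall>x y. {x, y} \<in> E \<longrightarrow> x \<in> Br p v \<longrightarrow> y \<in> Br p v \<longrightarrow> (x \<in> Col l b p v \<longleftrightarrow> y \<notin> Col l b p v))"
proof (induction l arbitrary: b p v)
  case 0
  have "Br p v \<noteq> {}" using v_Br[OF 0(1), of p] by blast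
  then have "card (Br p v) \<noteq> 0" using fin_Br[of p v] by simp
  then show ?case using 0(2) by simp
next
  case (Suc l)
  have IH: "\<And>w. w \<in> C p v \<Longrightarrow> Col l (\<not> b) v w \<subseteq> Br v w \<and> (w \<in> Col l (\<not> b) v w \<longleftrightarrow> \<not> b) \<and>
    (\<forall>x y. {x, y} \<in> E \<longrightarrow> x \<in> Br v w \<longrightarrow> y \<in> Br v w \<longrightarrow> (x \<in> Col l (\<not> b) v w \<longleftrightarrow> y \<notin> Col l (\<not> b) v w))"
  proof -
    fix w assume wC: "w \<in> C p v"
    have "card (Br v w) \<le> l" using card_Br_child[OF Suc.prems(1) wC] Suc.prems(2) by linarith
    then show "?thesis w" by (rule Suc.IH[OF C_Vm[OF wC]])
  qed
  have mem: "\<And>z w. w \<in> C p v \<Longrightarrow> z \<in> Br v w \<Longrightarrow> (z \<in> Col (Suc l) b p v \<longleftrightarrow> z \<in> Col l (\<not> b) v w)"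
  proof -
    fix z w assume wC: "w \<in> C p v" and z: "z \<in> Br v w"
    have zv: "z \<noteq> v" using z v_notin_BrC[OF wC] by blast
    have "z \<notin> Col l (\<not> b) v w'" if "w' \<in> C p v" "w' \<noteq> w" for w'
      using IH[OF that(1)] Br_disjC[OF wC that(1)] that(2) z by blast
    then have o: "\<And>w'. w' \<in> C p v \<Longrightarrow> z \<in> Col l (\<not> b) v w' \<Longrightarrow> w' = w" by blast
    show "z \<in> Col (Suc l) b p v \<longleftrightarrow> z \<in> Col l (\<not> b) v w"
    proof
      assume "z \<in> Col (Suc l) b p v"
      then obtain w' where "w' \<in> C p v" "z \<in> Col l (\<not> b) v w'" using zv by (auto split: if_splits)
      then show "z \<in> Col l (\<not> b) v w" using o by blast
    next
      assume "z \<in> Col l (\<not> b) v w"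
      then show "z \<in> Col (Suc l) b p v" using wC by auto
    qed
  qed
  have vnot: "\<And>w. w \<in> C p v \<Longrightarrow> v \<notin> Col l (\<not> b) v w"
  proof -
    fix w assume wC: "w \<in> C p v"
    have "Col l (\<not> b) v w \<subseteq> Br v w" using IH[OF wC] by blast
    then show "v \<notin> Col l (\<not> b) v w" using v_notin_BrC[OF wC] by blast
  qed
  have vmem: "v \<in> Col (Suc l) b p v \<longleftrightarrow> b" using vnot by auto
  have nbr: "\<And>y. {v, y} \<in> E \<Longrightarrow> y \<in> Br p v \<Longrightarrow> y \<in> C p v"
  proof -
    fix y assume e: "{v, y} \<in> E" and y: "y \<in> Br p v"
    have "y \<noteq> p" using p_notin_Br y e by (metis insert_commute)
    then show "y \<in> C p v" using e unfolding C_def nb_def by simp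
  qed
  have nbm: "\<And>y. {v, y} \<in> E \<Longrightarrow> y \<in> Br p v \<Longrightarrow> (y \<in> Col (Suc l) b p v \<longleftrightarrow> \<not> b)"
  proof -
    fix y assume e: "{v, y} \<in> E" and y: "y \<in> Br p v"
    have yC: "y \<in> C p v" using nbr[OF e y] .
    have "y \<in> Br v y" by (rule v_Br[OF C_Vm[OF yC]])
    then show "y \<in> Col (Suc l) b p v \<longleftrightarrow> \<not> b" using mem[OF yC] IH[OF yC] by blast
  qed
  show ?case
  proof (intro conjI allI impI)
    have "\<And>w. w \<in> C p v \<Longrightarrow> Col l (\<not> b) v w \<subseteq> Br v w" using IH by blast
    then have "(\<Union>w\<in>C p v. Col l (\<not> b) v w) \<subseteq> (\<Union>w\<in>C p v. Br v w)" by blast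
    then have s1: "insert v (\<Union>w\<in>C p v. Col l (\<not> b) v w) \<subseteq> insert v (\<Union>w\<in>C p v. Br v w)" by blast
    have "Col (Suc l) b p v \<subseteq> insert v (\<Union>w\<in>C p v. Col l (\<not> b) v w)" by auto
    also have "\<dots> \<subseteq> insert v (\<Union>w\<in>C p v. Br v w)" by (rule s1)
    also have "\<dots> = Br p v" using Br_decompC[OF Suc.prems(1), of p] by simp
    finally show "Col (Suc l) b p v \<subseteq> Br p v" .
    show "v \<in> Col (Suc l) b p v \<longleftrightarrow> b" by (rule vmem)
    fix x y assume e: "{x, y} \<in> E" and x: "x \<in> Br p v" and y: "y \<in> Br p v"
    have xy: "x \<noteq> y" using edgeV[OF e] by simp
    show "x \<in> Col (Suc l) b p v \<longleftrightarrow> y \<notin> Col (Suc l) b p v"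
    proof (cases "x = v")
      case True
      then show ?thesis using nbm[of y] e y vmem by auto
    next
      case xv: False
      show ?thesis
      proof (cases "y = v")
        case True
        then show ?thesis using nbm[of x] e x vmem by (auto simp: insert_commute)
      next
        case yv: False
        obtain w where wC: "w \<in> C p v" and xw: "x \<in> Br v w" using x xv Br_decompC[OF Suc.prems(1), of p] by blast
        have "{x, y} \<noteq> {v, w}" using xv yv by (auto simp: doubleton_eq_iff)
        then have yw: "y \<in> Br v w" using Br_closed[OF xw e] by blast
        show ?thesis using mem[OF wC xw] mem[OF wC yw] IH[OF wC] e xw yw by blast
      qed
    qed
  qed
qed


lemma edge_count:
  assumes "v \<in> V"
  shows "card {e \<in> E. e \<subseteq> Br p v} + 1 = card (Br p v)"
  using assms
proof (induction "card (Br p v)" arbitrary: p v rule: less_induct)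
  case less
  note vV = less.prems
  define EB where "EB = (\<lambda>p v. {e \<in> E. e \<subseteq> Br p v})"
  have IH: "\<And>w. w \<in> C p v \<Longrightarrow> card (EB v w) + 1 = card (Br v w)"
    unfolding EB_def using less.hyps[OF card_Br_child[OF vV] C_Vm] by blast
  have eq: "EB p v = (\<lambda>w. {v, w}) ` C p v \<union> (\<Union>w\<in>C p v. EB v w)"
  proof
    show "EB p v \<subseteq> (\<lambda>w. {v, w}) ` C p v \<union> (\<Union>w\<in>C p v. EB v w)"
    proof
      fix e assume "e \<in> EB p v"
      then have eE: "e \<in> E" and eB: "e \<subseteq> Br p v" unfolding EB_def by auto
      obtain x y where exy: "e = {x, y}" "x \<noteq> y" using edge[OF eE] by blast
      show "e \<in> (\<lambda>w. {v, w}) ` C p v \<union> (\<Union>w\<in>C p v. EB v w)"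
      proof (cases "v \<in> e")
        case True
        then obtain w where ew: "e = {v, w}" using exy by (auto simp: doubleton_eq_iff insert_commute)
        have "w \<noteq> p"
        proof
          assume wp: "w = p"
          then have "{p, v} \<in> E" using eE ew by (simp add: insert_commute)
          moreover have "p \<in> Br p v" using eB ew wp by blast
          ultimately show False using p_notin_Br by blast
        qed
        then have "w \<in> C p v" using eE ew unfolding C_def nb_def by simp
        then show ?thesis using ew by blast
      next
        case False
        have "x \<in> Br p v" "x \<noteq> v" using eB exy False by auto
        then obtain w where wC: "w \<in> C p v" and xw: "x \<in> Br v w"
          using Br_decompC[OF vV, of p] by blast
        have ne: "{x, y} \<noteq> {v, w}" using False exy by blast
        have "{x, y} \<in> E" using eE exy by simp
        then have yw: "y \<in> Br v w" using Br_closed[OF xw _ ne] by simp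
        have "e \<in> EB v w" unfolding EB_def using eE xw yw exy by blast
        then show ?thesis using wC by blast
      qed
    qed
    show "(\<lambda>w. {v, w}) ` C p v \<union> (\<Union>w\<in>C p v. EB v w) \<subseteq> EB p v"
    proof
      fix e assume "e \<in> (\<lambda>w. {v, w}) ` C p v \<union> (\<Union>w\<in>C p v. EB v w)"
      then consider w where "w \<in> C p v" "e = {v, w}" | w where "w \<in> C p v" "e \<in> EB v w" by blast
      then show "e \<in> EB p v"
      proof cases
        case 1
        have "v \<in> Br p v" by (rule v_Br[OF vV])
        moreover have "w \<in> Br p v" using Br_decompC[OF vV, of p] v_Br[OF C_Vm[OF 1(1)]] 1(1) by blast
        ultimately show ?thesis unfolding EB_def using 1 C_edge[OF 1(1)] by auto
      next
        case 2
        have "Br v w \<subseteq> Br p v" using Br_decompC[OF vV, of p] 2(1) by blast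
        then show ?thesis using 2(2) unfolding EB_def by auto
      qed
    qed
  qed
  have fin1: "finite ((\<lambda>w. {v, w}) ` C p v)" using fin_C by simp
  have finEB: "\<And>w. finite (EB v w)" unfolding EB_def using finE by simp
  have fin2: "finite (\<Union>w\<in>C p v. EB v w)" using fin_C finEB by simp
  have disj1: "(\<lambda>w. {v, w}) ` C p v \<inter> (\<Union>w\<in>C p v. EB v w) = {}"
  proof (rule ccontr)
    assume "(\<lambda>w. {v, w}) ` C p v \<inter> (\<Union>w\<in>C p v. EB v w) \<noteq> {}"
    then obtain w w' where "w \<in> C p v" "w' \<in> C p v" "{v, w} \<in> EB v w'" by blast
    then have "v \<in> Br v w'" unfolding EB_def by blast
    then show False using v_notin_BrC[OF \<open>w' \<in> C p v\<close>] by simp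
  qed
  have card1: "card ((\<lambda>w. {v, w}) ` C p v) = card (C p v)"
    by (rule card_image) (auto simp: inj_on_def doubleton_eq_iff)
  have card2: "card (\<Union>w\<in>C p v. EB v w) = (\<Sum>w\<in>C p v. card (EB v w))"
  proof (rule card_UN_disjoint[OF fin_C])
    show "\<forall>i\<in>C p v. finite (EB v i)" using finEB by blast
    show "\<forall>i\<in>C p v. \<forall>j\<in>C p v. i \<noteq> j \<longrightarrow> EB v i \<inter> EB v j = {}"
    proof (intro ballI impI)
      fix i j assume ij: "i \<in> C p v" "j \<in> C p v" "i \<noteq> j"
      have d: "Br v i \<inter> Br v j = {}" by (rule Br_disjC[OF ij])
      show "EB v i \<inter> EB v j = {}"
      proof (rule ccontr)
        assume "EB v i \<inter> EB v j \<noteq> {}"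
        then obtain e where e: "e \<in> E" "e \<subseteq> Br v i" "e \<subseteq> Br v j" unfolding EB_def by blast
        obtain x y where "e = {x, y}" using edge[OF e(1)] by blast
        then show False using e d by blast
      qed
    qed
  qed
  have "card (EB p v) = card (C p v) + (\<Sum>w\<in>C p v. card (EB v w))"
    using eq card_Un_disjoint[OF fin1 fin2 disj1] card1 card2 by simp
  also have "\<dots> = (\<Sum>w\<in>C p v. card (EB v w) + 1)" by (subst sum.distrib) simp
  also have "\<dots> = (\<Sum>w\<in>C p v. card (Br v w))" using IH by (intro sum.cong) auto
  finally have "card (EB p v) + 1 = card (Br p v)" using card_Br_sum[OF vV, of p] by simp
  then show ?case unfolding EB_def .
qed

definition mu :: "'a \<Rightarrow> nat" where "mu c = Max (insert 0 ((\<lambda>w. card (Br c w)) ` nb c))"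

lemma centroid: "\<exists>c\<in>V. \<forall>w\<in>nb c. card (Br c w) \<le> card V div 2"
proof -
  obtain c0 where "c0 \<in> V" using Vne by blast
  then obtain c where cV: "c \<in> V" and cmin: "\<And>y. y \<in> V \<Longrightarrow> mu c \<le> mu y"
    using ex_has_least_nat[of "\<lambda>x. x \<in> V" c0 mu] by blast
  have fin: "\<And>u. finite (insert 0 ((\<lambda>w. card (Br u w)) ` nb u))" using fin_nb by simp
  show ?thesis
  proof (rule bexI[OF _ cV], rule ballI, rule ccontr)
    fix w assume wn: "w \<in> nb c" and big: "\<not> card (Br c w) \<le> card V div 2"
    have e: "{c, w} \<in> E" using wn unfolding nb_def by simp
    have wV: "w \<in> V" using wn nb_V by blast
    have "card (Br c w) \<le> mu c" unfolding mu_def using fin[of c] wn by (intro Max_ge) auto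
    moreover have "mu w < card (Br c w)"
    proof -
      have "\<forall>a\<in>insert 0 ((\<lambda>u. card (Br w u)) ` nb w). a < card (Br c w)"
      proof
        fix a assume "a \<in> insert 0 ((\<lambda>u. card (Br w u)) ` nb w)"
        then consider "a = 0" | u where "u \<in> nb w" "a = card (Br w u)" by blast
        then show "a < card (Br c w)"
        proof cases
          case 1 then show ?thesis using big by simp
        next
          case 2
          show ?thesis
          proof (cases "u = c")
            case True
            have ec: "{c, w} \<in> E" using e .
            have "card (Br c w) + card (Br w c) = card V"
              using Br_compl[OF ec] fin_Br card_Un_disjoint by metis
            moreover have "card V \<le> 2 * (card V div 2) + 1" by presburger
            moreover have "a = card (Br w c)" using 2 True by simp
            ultimately show ?thesis using big by linarith
          next
            case False
            then have "u \<in> C c w" using 2(1) unfolding C_def by simp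
            then show ?thesis using 2(2) card_Br_child[OF wV] by blast
          qed
        qed
      qed
      then show ?thesis unfolding mu_def using fin[of w] by (subst Max_less_iff) auto
    qed
    ultimately have "mu w < mu c" by linarith
    then show False using cmin[OF wV] by linarith
  qed
qed

lemma small_degree:
  assumes deg: "\<forall>u\<in>V. card (nb u) \<le> 1" and p0: "p0 \<notin> V"
  shows "card V \<le> 2"
proof -
  obtain c where cV: "c \<in> V" using Vne by blast
  have ne: "{p0, c} \<notin> E" using p0 edgeV by blast
  have VV: "V = insert c (\<Union>w\<in>C p0 c. Br c w)" using Br_decompC[OF cV, of p0] Br_nonedge[OF cV ne] by simp
  have one: "\<And>w. w \<in> C p0 c \<Longrightarrow> Br c w = {w}"
  proof -
    fix w assume wC: "w \<in> C p0 c"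
    have wV: "w \<in> V" by (rule C_Vm[OF wC])
    have cn: "c \<in> nb w" using C_edge[OF wC] unfolding nb_def by (simp add: insert_commute)
    have "card (nb w) \<le> Suc 0" using deg wV by simp
    then have "\<forall>a\<in>nb w. \<forall>b\<in>nb w. a = b" using card_le_Suc0_iff_eq[OF fin_nb] by blast
    then have "nb w = {c}" using cn by blast
    then have "C c w = {}" unfolding C_def by simp
    then show "Br c w = {w}" using Br_decompC[OF wV, of c] by simp
  qed
  have "V = insert c (C p0 c)" using VV one by auto
  moreover have "card (C p0 c) \<le> 1" using card_C_le(1)[OF deg cV] .
  ultimately show ?thesis using fin_C by (metis card_insert_le_m1' add_le_mono le_trans nat_1_add_1 order_refl)
qed


lemma induced_ugraph: "W \<subseteq> V \<Longrightarrow> ugraph W {e \<in> E. e \<subseteq> W}"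
  unfolding ugraph_def
proof (intro conjI ballI)
  assume "W \<subseteq> V" then show "finite W" using finV finite_subset by auto
  fix e assume "e \<in> {e \<in> E. e \<subseteq> W}"
  then have eE: "e \<in> E" and eW: "e \<subseteq> W" by auto
  obtain u v where "u \<noteq> v" "e = {u, v}" using edge[OF eE] by blast
  then show "\<exists>u v. u \<in> W \<and> v \<in> W \<and> u \<noteq> v \<and> e = {u, v}" using eW by blast
qed

lemma induced_forest: "W \<subseteq> V \<Longrightarrow> forest W {e \<in> E. e \<subseteq> W}"
  unfolding forest_def
proof (intro conjI notI)
  assume "W \<subseteq> V" then show "ugraph W {e \<in> E. e \<subseteq> W}" by (rule induced_ugraph)
  assume "\<exists>xs. is_cycle {e \<in> E. e \<subseteq> W} xs"
  then obtain xs where "is_cycle {e \<in> E. e \<subseteq> W} xs" by blast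
  then have "is_cycle E xs" unfolding is_cycle_def by auto
  then show False using nocyc by blast
qed

lemma induced_subgraph: "W \<subseteq> V \<Longrightarrow> subgraph W {e \<in> E. e \<subseteq> W} V E"
  unfolding subgraph_def using induced_ugraph by blast

lemma induced_tree:
  assumes "W \<subseteq> V" "w0 \<in> W" "\<forall>x\<in>W. reach {e \<in> E. e \<subseteq> W} w0 x"
  shows "tree W {e \<in> E. e \<subseteq> W}"
  unfolding tree_def connected_graph_def
proof (intro conjI ballI)
  show "forest W {e \<in> E. e \<subseteq> W}" by (rule induced_forest[OF assms(1)])
  show "W \<noteq> {}" using assms(2) by blast
  fix u v assume "u \<in> W" "v \<in> W"
  then have r1: "reach {e \<in> E. e \<subseteq> W} w0 u" and r2: "reach {e \<in> E. e \<subseteq> W} w0 v" using assms(3) by auto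
  show "reach {e \<in> E. e \<subseteq> W} u v" by (rule reach_trans[OF reach_sym[OF r1] r2])
qed

lemma main:
  assumes deg: "\<forall>u\<in>V. card (nb u) \<le> D" and D2: "2 \<le> D" and p0: "p0 \<notin> V"
    and big: "4 * (D + 1) ^ (4 * D) + 4 \<le> card V"
  shows "\<exists>M VS ES VF EF.
        matching M \<and> M \<subseteq> E \<and> tree VS ES \<and> subgraph VS ES V E \<and>
        forest VF EF \<and> subgraph VF EF V E \<and>
        M \<union> ES \<union> EF = E \<and> M \<inter> ES = {} \<and> M \<inter> EF = {} \<and> ES \<inter> EF = {} \<and>
        VS \<inter> VF = {} \<and>
        (\<forall>e\<in>M. card (e \<inter> VS) = 1 \<and> card (e \<inter> VF) = 1) \<and>
        card VS \<le> card V div 2 \<and>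
        (\<forall>v\<in>VF. card (component VF EF v) \<le> card V div 2) \<and>
        same_bip_class V E (\<Union>M \<inter> VS) \<and>
        min_subtree_card VS ES (\<Union>M \<inter> VS) \<le> D ^ (4 * D + 1)"
proof -
  obtain c where cV: "c \<in> V" and cen: "\<forall>w\<in>nb c. card (Br c w) \<le> card V div 2"
    using centroid by blast
  have ne: "{p0, c} \<notin> E" using p0 edgeV by blast
  have BrV: "Br p0 c = V" using Br_nonedge[OF cV ne] .
  define L where "L = 4 * D"
  define L' where "L' = L - 1"
  have LL: "L = Suc L'" unfolding L'_def L_def using D2 by simp
  define col where "col = (\<lambda>x. x \<in> Col (card V) False p0 c)"
  have ci: "Col (card V) False p0 c \<subseteq> Br p0 c \<and> (c \<in> Col (card V) False p0 c \<longleftrightarrow> False) \<and>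
    (\<forall>x y. {x, y} \<in> E \<longrightarrow> x \<in> Br p0 c \<longrightarrow> y \<in> Br p0 c \<longrightarrow> (x \<in> Col (card V) False p0 c \<longleftrightarrow> y \<notin> Col (card V) False p0 c))"
    using Col_inv[OF cV, of p0 "card V" False] BrV by simp
  have colp: "\<And>x y. {x, y} \<in> E \<Longrightarrow> col x \<noteq> col y"
  proof -
    fix x y assume e: "{x, y} \<in> E"
    then have "x \<in> Br p0 c" "y \<in> Br p0 c" using edgeV[OF e] BrV by auto
    then show "col x \<noteq> col y" using ci e unfolding col_def by blast
  qed
  have colc: "col c = False" using ci unfolding col_def by blast
  define S where "S = Sinc L False p0 c"
  define F where "F = Fset L False p0 c"
  define M where "M = Mset L False p0 c"
  define K where "K = Kset L False p0 c"
  define ES where "ES = {e \<in> E. e \<subseteq> S}"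
  define EF where "EF = {e \<in> E. e \<subseteq> F}"
  have pt: "S \<union> F = V" "S \<inter> F = {}" "c \<in> S"
    using part[OF cV, of L False p0] BrV unfolding S_def F_def by auto
  have SV: "S \<subseteq> V" and FV: "F \<subseteq> V" using pt by auto
  have ed: "\<forall>e\<in>E. e \<subseteq> S \<or> e \<subseteq> F \<or> e \<in> M"
  proof
    fix e assume eE: "e \<in> E"
    have "e \<subseteq> Br p0 c" using edge[OF eE] BrV by auto
    then show "e \<subseteq> S \<or> e \<subseteq> F \<or> e \<in> M"
      using edges_inv[OF cV, of p0 L False] eE unfolding S_def F_def M_def by blast
  qed
  have Mi: "matching M \<and> (\<forall>e\<in>M. \<exists>a h. e = {a, h} \<and> e \<in> E \<and> a \<in> S \<and> h \<in> F \<and> a \<in> K \<and> col a)"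
    unfolding M_def S_def F_def K_def by (rule M_inv[where col=col, OF colp cV colc])
  have Sc: "\<forall>x\<in>S. reach ES c x" unfolding ES_def S_def by (rule S_conn[OF cV])
  have Ki: "K \<subseteq> S \<and> (0 < L \<longrightarrow> c \<in> K) \<and> (\<forall>x\<in>K. reach {e \<in> E. e \<subseteq> K} c x)"
    unfolding K_def S_def by (rule K_inv[OF cV])
  have cK: "c \<in> K" using Ki LL by simp
  have Kc: "card K \<le> D ^ (L + 1)" using K_card[OF deg D2 cV, of L False p0] ne unfolding K_def by simp
  have Scard: "real (card S) \<le> (1 - 1 / real D) ^ (L div 2) * real (card V) + real (D + 1) ^ L"
    using S_card[OF deg _ cV, of L False p0] D2 BrV unfolding S_def by simp
  have Fp: "\<forall>x\<in>F. \<exists>a b. {a, b} \<in> E \<and> x \<in> Br a b \<and> Br a b \<subseteq> F \<and> a \<in> S \<and> card (Br a b) \<le> card V div 2"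
  proof
    fix x assume "x \<in> F"
    moreover have "\<not> xb False p0 c" unfolding xb_def by simp
    ultimately obtain w where wC: "w \<in> Cb False p0 c" and xw: "x \<in> Fset L' True c w"
      unfolding F_def LL by auto
    have wC': "w \<in> C p0 c" using wC unfolding Cb_def by simp
    have wn: "w \<in> nb c" using wC' unfolding C_def by simp
    obtain a b where ab: "{a, b} \<in> E" "x \<in> Br a b" "Br a b \<subseteq> Fset L' True c w"
      "a \<in> Sinc L' True c w" "card (Br a b) < card (Br c w)"
      using F_pieces[OF C_Vm[OF wC'], of L' True c] xw by auto
    have s1: "Fset L' True c w \<subseteq> F" unfolding F_def LL using wC by auto
    have s2: "Sinc L' True c w \<subseteq> S" unfolding S_def LL using wC by auto
    have "card (Br c w) \<le> card V div 2" using cen wn by blast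
    then have "card (Br a b) \<le> card V div 2" using ab(5) by linarith
    then show "\<exists>a b. {a, b} \<in> E \<and> x \<in> Br a b \<and> Br a b \<subseteq> F \<and> a \<in> S \<and> card (Br a b) \<le> card V div 2"
      using ab s1 s2 by blast
  qed
  have Mprop: "\<And>e. e \<in> M \<Longrightarrow> \<exists>a h. e = {a, h} \<and> e \<in> E \<and> a \<in> S \<and> h \<in> F \<and> a \<in> K \<and> col a"
    using Mi by blast
  show ?thesis
  proof (intro exI conjI)
    show "matching M" using Mi by blast
    show "M \<subseteq> E"
    proof
      fix e assume "e \<in> M"
      then obtain a h where "e = {a, h} \<and> e \<in> E" using Mprop by blast
      then show "e \<in> E" by blast
    qed
    show "tree S ES" unfolding ES_def by (rule induced_tree[OF SV pt(3)]) (use Sc ES_def in simp)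
    show "subgraph S ES V E" unfolding ES_def by (rule induced_subgraph[OF SV])
    show "forest F EF" unfolding EF_def by (rule induced_forest[OF FV])
    show "subgraph F EF V E" unfolding EF_def by (rule induced_subgraph[OF FV])
    show "M \<union> ES \<union> EF = E"
    proof
      show "M \<union> ES \<union> EF \<subseteq> E" using \<open>M \<subseteq> E\<close> unfolding ES_def EF_def by blast
      show "E \<subseteq> M \<union> ES \<union> EF"
      proof
        fix e assume "e \<in> E"
        then have "e \<subseteq> S \<or> e \<subseteq> F \<or> e \<in> M" using ed by blast
        then show "e \<in> M \<union> ES \<union> EF" using \<open>e \<in> E\<close> unfolding ES_def EF_def by blast
      qed
    qed
    show "M \<inter> ES = {}"
    proof (rule ccontr)
      assume "M \<inter> ES \<noteq> {}"
      then obtain e where e: "e \<in> M" "e \<subseteq> S" unfolding ES_def by blast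
      then obtain a h where "e = {a, h} \<and> h \<in> F" using Mprop by blast
      then show False using e pt(2) by blast
    qed
    show "M \<inter> EF = {}"
    proof (rule ccontr)
      assume "M \<inter> EF \<noteq> {}"
      then obtain e where e: "e \<in> M" "e \<subseteq> F" unfolding EF_def by blast
      then obtain a h where "e = {a, h} \<and> a \<in> S" using Mprop by blast
      then show False using e pt(2) by blast
    qed
    show "ES \<inter> EF = {}"
    proof (rule ccontr)
      assume "ES \<inter> EF \<noteq> {}"
      then obtain e where e: "e \<in> E" "e \<subseteq> S" "e \<subseteq> F" unfolding ES_def EF_def by blast
      obtain u v where "e = {u, v}" using edge[OF e(1)] by blast
      then show False using e pt(2) by blast
    qed
    show "S \<inter> F = {}" by (rule pt(2))
    show "\<forall>e\<in>M. card (e \<inter> S) = 1 \<and> card (e \<inter> F) = 1"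
    proof
      fix e assume "e \<in> M"
      then obtain a h where "e = {a, h} \<and> a \<in> S \<and> h \<in> F" using Mprop by blast
      then have ah: "e = {a, h}" "a \<in> S" "h \<in> F" by auto
      have "a \<notin> F" "h \<notin> S" using ah pt(2) by blast+
      then have "e \<inter> S = {a}" "e \<inter> F = {h}" using ah by auto
      then show "card (e \<inter> S) = 1 \<and> card (e \<inter> F) = 1" by simp
    qed
    show "card S \<le> card V div 2"
    proof -
      have "L div 2 = 2 * D" unfolding L_def by simp
      then have "(1 - 1 / real D) ^ (L div 2) \<le> 1 / 4" using rho_quarter[of D] D2 by simp
      then have "(1 - 1 / real D) ^ (L div 2) * real (card V) \<le> 1 / 4 * real (card V)"
        by (intro mult_right_mono) auto
      then have a1: "real (card S) \<le> real (card V) / 4 + real (D + 1) ^ L" using Scard by linarith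
      have "real (4 * (D + 1) ^ (4 * D) + 4) \<le> real (card V)" using big by (rule of_nat_mono)
      then have a2: "4 * real (D + 1) ^ L + 4 \<le> real (card V)" unfolding L_def by simp
      have "card V \<le> 2 * (card V div 2) + 1" by presburger
      then have a3: "real (card V) \<le> 2 * real (card V div 2) + 1" by linarith
      have "real (card S) \<le> real (card V div 2)" using a1 a2 a3 by linarith
      then show ?thesis by simp
    qed
    show "\<forall>v\<in>F. card (component F EF v) \<le> card V div 2"
    proof
      fix x assume xF: "x \<in> F"
      obtain a b where ab: "{a, b} \<in> E" "x \<in> Br a b" "Br a b \<subseteq> F" "a \<in> S" "card (Br a b) \<le> card V div 2"
        using Fp xF by blast
      have aF: "a \<notin> F" using ab(4) pt(2) by blast
      have "component F EF x \<subseteq> Br a b"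
      proof
        fix u assume "u \<in> component F EF x"
        then have "reach EF x u" unfolding component_def by simp
        then show "u \<in> Br a b"
        proof (rule reach_closed)
          show "x \<in> Br a b" by (rule ab(2))
          fix z y assume z: "z \<in> Br a b" and zy: "{z, y} \<in> EF"
          have "{z, y} \<noteq> {a, b}" using zy aF unfolding EF_def by blast
          then show "y \<in> Br a b" using Br_closed[OF z] zy unfolding EF_def by blast
        qed
      qed
      then have "card (component F EF x) \<le> card (Br a b)" using fin_Br by (rule card_mono[rotated])
      then show "card (component F EF x) \<le> card V div 2" using ab(5) by linarith
    qed
    show "same_bip_class V E (\<Union>M \<inter> S)"
      unfolding same_bip_class_def
    proof (rule exI[of _ col], intro conjI allI impI ballI)
      fix u v assume "{u, v} \<in> E" then show "col u \<noteq> col v" by (rule colp)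
    next
      fix x assume "x \<in> \<Union>M \<inter> S"
      then obtain e where e: "e \<in> M" "x \<in> e" "x \<in> S" by blast
      then obtain a h where "e = {a, h} \<and> h \<in> F \<and> col a" using Mprop by blast
      then have ah: "e = {a, h}" "h \<in> F" "col a" by auto
      have "h \<notin> S" using ah pt(2) by blast
      then have "x = a" using e ah by blast
      then show "col x" using ah by simp
    qed
    show "min_subtree_card S ES (\<Union>M \<inter> S) \<le> D ^ (4 * D + 1)"
    proof -
      have KV: "K \<subseteq> V" using Ki SV by blast
      have X: "\<Union>M \<inter> S \<subseteq> K"
      proof
        fix x assume "x \<in> \<Union>M \<inter> S"
        then obtain e where e: "e \<in> M" "x \<in> e" "x \<in> S" by blast
        then obtain a h where "e = {a, h} \<and> h \<in> F \<and> a \<in> K" using Mprop by blast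
        then have ah: "e = {a, h}" "h \<in> F" "a \<in> K" by auto
        have "h \<notin> S" using ah pt(2) by blast
        then show "x \<in> K" using e ah by blast
      qed
      have sg: "subgraph K {e \<in> E. e \<subseteq> K} S ES"
        unfolding subgraph_def ES_def using induced_ugraph[OF KV] Ki by blast
      have tr: "tree K {e \<in> E. e \<subseteq> K}" by (rule induced_tree[OF KV cK]) (use Ki in blast)
      have "min_subtree_card S ES (\<Union>M \<inter> S) \<le> card K"
        unfolding min_subtree_card_def
      proof (rule Least_le)
        show "\<exists>V' E'. subgraph V' E' S ES \<and> tree V' E' \<and> \<Union>M \<inter> S \<subseteq> V' \<and> card K = card V'"
          apply (rule exI[of _ K], rule exI[of _ "{e \<in> E. e \<subseteq> K}"])
          using sg tr X by simp
      qed
      also have "\<dots> \<le> D ^ (4 * D + 1)" using Kc unfolding L_def .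
      finally show ?thesis .
    qed
  qed
qed

end

theorem lemma8p1:
  "\<forall>D::nat. \<exists>k0::nat. \<forall>k\<ge>k0. \<forall>(V::nat set) E.
     tree V E \<and> card E = k \<and> max_degree_le V E D \<longrightarrow>
     (\<exists>M VS ES VF EF.
        matching M \<and> M \<subseteq> E \<and> tree VS ES \<and> subgraph VS ES V E \<and>
        forest VF EF \<and> subgraph VF EF V E \<and>
        M \<union> ES \<union> EF = E \<and> M \<inter> ES = {} \<and> M \<inter> EF = {} \<and> ES \<inter> EF = {} \<and>
        VS \<inter> VF = {} \<and>
        (\<forall>e\<in>M. card (e \<inter> VS) = 1 \<and> card (e \<inter> VF) = 1) \<and>
        card VS \<le> nat \<lceil>real k / 2\<rceil> \<and>
        (\<forall>v\<in>VF. card (component VF EF v) \<le> nat \<lceil>real k / 2\<rceil>) \<and>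
        same_bip_class V E (\<Union>M \<inter> VS) \<and>
        min_subtree_card VS ES (\<Union>M \<inter> VS) \<le> D ^ (4 * D + 1))"
proof (intro allI)
  fix D :: nat
  show "\<exists>k0::nat. \<forall>k\<ge>k0. \<forall>(V::nat set) E.
     tree V E \<and> card E = k \<and> max_degree_le V E D \<longrightarrow>
     (\<exists>M VS ES VF EF.
        matching M \<and> M \<subseteq> E \<and> tree VS ES \<and> subgraph VS ES V E \<and>
        forest VF EF \<and> subgraph VF EF V E \<and>
        M \<union> ES \<union> EF = E \<and> M \<inter> ES = {} \<and> M \<inter> EF = {} \<and> ES \<inter> EF = {} \<and>
        VS \<inter> VF = {} \<and>
        (\<forall>e\<in>M. card (e \<inter> VS) = 1 \<and> card (e \<inter> VF) = 1) \<and>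
        card VS \<le> nat \<lceil>real k / 2\<rceil> \<and>
        (\<forall>v\<in>VF. card (component VF EF v) \<le> nat \<lceil>real k / 2\<rceil>) \<and>
        same_bip_class V E (\<Union>M \<inter> VS) \<and>
        min_subtree_card VS ES (\<Union>M \<inter> VS) \<le> D ^ (4 * D + 1))"
  proof (rule exI[of _ "4 * (D + 1) ^ (4 * D) + 4"], intro allI impI)
    fix k :: nat and V :: "nat set" and E
    assume kb: "4 * (D + 1) ^ (4 * D) + 4 \<le> k"
      and H: "tree V E \<and> card E = k \<and> max_degree_le V E D"
    interpret T: tr V E using H by unfold_locales blast
    obtain p0 :: nat where p0: "p0 \<notin> V"
      using ex_new_if_finite[OF infinite_UNIV_nat T.finV] by blast
    obtain c where cV: "c \<in> V" using T.Vne by blast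
    have ne: "{p0, c} \<notin> E" using p0 T.edgeV by blast
    have BrV: "T.Br p0 c = V" using T.Br_nonedge[OF cV ne] .
    have EE: "{e \<in> E. e \<subseteq> V} = E" using T.edge by blast
    have cardV: "card V = k + 1" using T.edge_count[OF cV, of p0] BrV EE H by simp
    have deg: "\<forall>u\<in>V. card (T.nb u) \<le> D" using H T.card_nb unfolding max_degree_le_def by simp
    have hk: "nat \<lceil>real k / 2\<rceil> = card V div 2" using ceil_half[of k] cardV by simp
    show "\<exists>M VS ES VF EF.
        matching M \<and> M \<subseteq> E \<and> tree VS ES \<and> subgraph VS ES V E \<and>
        forest VF EF \<and> subgraph VF EF V E \<and>
        M \<union> ES \<union> EF = E \<and> M \<inter> ES = {} \<and> M \<inter> EF = {} \<and> ES \<inter> EF = {} \<and>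
        VS \<inter> VF = {} \<and>
        (\<forall>e\<in>M. card (e \<inter> VS) = 1 \<and> card (e \<inter> VF) = 1) \<and>
        card VS \<le> nat \<lceil>real k / 2\<rceil> \<and>
        (\<forall>v\<in>VF. card (component VF EF v) \<le> nat \<lceil>real k / 2\<rceil>) \<and>
        same_bip_class V E (\<Union>M \<inter> VS) \<and>
        min_subtree_card VS ES (\<Union>M \<inter> VS) \<le> D ^ (4 * D + 1)"
    proof (cases "2 \<le> D")
      case True
      have big: "4 * (D + 1) ^ (4 * D) + 4 \<le> card V" using kb cardV by linarith
      show ?thesis unfolding hk by (rule T.main[OF deg True p0 big])
    next
      case False
      then have "\<forall>u\<in>V. card (T.nb u) \<le> 1" using deg by fastforce
      then have "card V \<le> 2" using T.small_degree p0 by blast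
      moreover have "4 \<le> k" using kb by linarith
      ultimately show ?thesis using cardV by linarith
    qed
  qed
qed

end
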